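(* For a Cartesian left additive category $\mathbb{X}$, the category $\mathcal{D}[\mathbb{X}]$ of $\mathsf{D}$-sequences (a subcategory of the category of pre-$\mathsf{D}$-sequences of $\mathbb{X}$, with the same identities, composition, pointwise finite product structure and pointwise additive structure) is a well-defined Cartesian left additive category.
   Context: Composition in diagrammatic order. A Cartesian left additive category is a category with finite products whose hom-sets are commutative monoids with $f(g+h)=fg+fh$, $f0=0$, in which all projections $\pi_j$ are additive ($(f+g)\pi_j=f\pi_j+g\pi_j$, $0\pi_j=0$). Let $\mathsf{P}(A)=A\times A$, $\mathsf{P}(f)=f\times f$. A pre-$\mathsf{D}$-sequence $f_\bullet:A\to B$ is $(f_0,f_1,\dots)$ with $f_n:\mathsf{P}^n(A)\to B$; $(h\cdot f_\bullet)_n=\mathsf{P}^n(h)f_n$; $\mathsf{T}(f_\bullet):\mathsf{P}(A)\to\mathsf{P}(B)$, $\mathsf{T}(f_\bullet)_n=\langle\mathsf{P}^n(\pi_0)f_n,f_{n+1}\rangle$; $\mathsf{D}[f_\bullet]:\mathsf{P}(A)\to B$, $\mathsf{D}[f_\bullet]_n=f_{n+1}$. Identity $i_\bullet$: $i_0=1$, $i_n=\pi_1\cdots\pi_1$ ($n$ times). Composition $(f_\bullet\ast g_\bullet)_n=\mathsf{T}^n(f_\bullet)_0g_n$. Products: terminal object of $\mathbb{X}$, projections $i_\bullet\cdot\pi_j$ where $(i_\bullet\cdot\pi_j)_n=i_n\pi_j$, pairing $\langle f_\bullet,g_\bullet\rangle_n=\langle f_n,g_n\rangle$. Addition: $0_n=0$,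 $(f_\bullet+g_\bullet)_n=f_n+g_n$. A $\mathsf{D}$-sequence is a pre-$\mathsf{D}$-sequence such that for all $n$, with $C=\mathsf{P}^n(A)$: $\langle1,0\rangle\cdot\mathsf{D}^{n+1}[f_\bullet]=0_\bullet$ ($\langle1,0\rangle:C\to C\times C$); $(1\times(\pi_0+\pi_1))\cdot\mathsf{D}^{n+1}[f_\bullet]=(1\times\pi_0)\cdot\mathsf{D}^{n+1}[f_\bullet]+(1\times\pi_1)\cdot\mathsf{D}^{n+1}[f_\bullet]$ (maps $C\times(C\times C)\to C\times C$); $\ell\cdot\mathsf{D}^{n+2}[f_\bullet]=\mathsf{D}^{n+1}[f_\bullet]$ with $\ell=\langle1,0\rangle\times\langle0,1\rangle:C\times C\to(C\times C)\times(C\times C)$; $c\cdot\mathsf{D}^{n+2}[f_\bullet]=\mathsf{D}^{n+2}[f_\bullet]$ with $c=\langle\langle\pi_0\pi_0,\pi_1\pi_0\rangle,\langle\pi_0\pi_1,\pi_1\pi_1\rangle\rangle$ on $(C\times C)\times(C\times C)$. *)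

theory Defs
  imports Main
begin

text \<open>A category with chosen finite products and a left additive structure,
  presented with hom-sets indexed by objects. Composition is in diagrammatic order:
  cmp A B C f g is "f then g" for f : A -> B, g : B -> C.\<close>

record ('o, 'm) clac =
  obj  :: "'o set"
  hom  :: "'o \<Rightarrow> 'o \<Rightarrow> 'm set"
  idm  :: "'o \<Rightarrow> 'm"
  cmp  :: "'o \<Rightarrow> 'o \<Rightarrow> 'o \<Rightarrow> 'm \<Rightarrow> 'm \<Rightarrow> 'm"
  trm  :: "'o"
  bng  :: "'o \<Rightarrow> 'm"
  prd  :: "'o \<Rightarrow> 'o \<Rightarrow> 'o"
  pr0  :: "'o \<Rightarrow> 'o \<Rightarrow> 'm"
  pr1  :: "'o \<Rightarrow> 'o \<Rightarrow> 'm"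
  pair :: "'o \<Rightarrow> 'o \<Rightarrow> 'o \<Rightarrow> 'm \<Rightarrow> 'm \<Rightarrow> 'm"
  zro  :: "'o \<Rightarrow> 'o \<Rightarrow> 'm"
  add  :: "'o \<Rightarrow> 'o \<Rightarrow> 'm \<Rightarrow> 'm \<Rightarrow> 'm"

definition is_category :: "('o, 'm) clac \<Rightarrow> bool" where
  "is_category X \<longleftrightarrow>
     (\<forall>A\<in>obj X. idm X A \<in> hom X A A) \<and>
     (\<forall>A\<in>obj X. \<forall>B\<in>obj X. \<forall>C\<in>obj X. \<forall>f\<in>hom X A B. \<forall>g\<in>hom X B C.
        cmp X A B C f g \<in> hom X A C) \<and>
     (\<forall>A\<in>obj X. \<forall>B\<in>obj X. \<forall>f\<in>hom X A B.
        cmp X A A B (idm X A) f = f \<and> cmp X A B B f (idm X B) = f) \<and>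
     (\<forall>A\<in>obj X. \<forall>B\<in>obj X. \<forall>C\<in>obj X. \<forall>D\<in>obj X.
        \<forall>f\<in>hom X A B. \<forall>g\<in>hom X B C. \<forall>h\<in>hom X C D.
        cmp X A C D (cmp X A B C f g) h = cmp X A B D f (cmp X B C D g h))"

definition has_finite_products :: "('o, 'm) clac \<Rightarrow> bool" where
  "has_finite_products X \<longleftrightarrow>
     trm X \<in> obj X \<and>
     (\<forall>A\<in>obj X. bng X A \<in> hom X A (trm X) \<and> (\<forall>f\<in>hom X A (trm X). f = bng X A)) \<and>
     (\<forall>A\<in>obj X. \<forall>B\<in>obj X.
        prd X A B \<in> obj X \<and>
        pr0 X A B \<in> hom X (prd X A B) A \<and>
        pr1 X A B \<in> hom X (prd X A B) B \<and>
        (\<forall>C\<in>obj X. \<forall>f\<in>hom X C A. \<forall>g\<in>hom X C B.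
           pair X C A B f g \<in> hom X C (prd X A B) \<and>
           cmp X C (prd X A B) A (pair X C A B f g) (pr0 X A B) = f \<and>
           cmp X C (prd X A B) B (pair X C A B f g) (pr1 X A B) = g) \<and>
        (\<forall>C\<in>obj X. \<forall>h\<in>hom X C (prd X A B).
           h = pair X C A B (cmp X C (prd X A B) A h (pr0 X A B))
                            (cmp X C (prd X A B) B h (pr1 X A B))))"

definition is_left_additive :: "('o, 'm) clac \<Rightarrow> bool" where
  "is_left_additive X \<longleftrightarrow>
     (\<forall>A\<in>obj X. \<forall>B\<in>obj X.
        zro X A B \<in> hom X A B \<and>
        (\<forall>f\<in>hom X A B. \<forall>g\<in>hom X A B. add X A B f g \<in> hom X A B) \<and>
        (\<forall>f\<in>hom X A B. \<forall>g\<in>hom X A B. \<forall>h\<in>hom X A B.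
           add X A B (add X A B f g) h = add X A B f (add X A B g h)) \<and>
        (\<forall>f\<in>hom X A B. \<forall>g\<in>hom X A B. add X A B f g = add X A B g f) \<and>
        (\<forall>f\<in>hom X A B. add X A B f (zro X A B) = f)) \<and>
     (\<forall>A\<in>obj X. \<forall>B\<in>obj X. \<forall>C\<in>obj X. \<forall>f\<in>hom X A B.
        (\<forall>g\<in>hom X B C. \<forall>h\<in>hom X B C.
           cmp X A B C f (add X B C g h) = add X A C (cmp X A B C f g) (cmp X A B C f h)) \<and>
        cmp X A B C f (zro X B C) = zro X A C)"

definition projections_additive :: "('o, 'm) clac \<Rightarrow> bool" where
  "projections_additive X \<longleftrightarrow>
     (\<forall>A\<in>obj X. \<forall>B\<in>obj X. \<forall>C\<in>obj X.
        (\<forall>f\<in>hom X C (prd X A B). \<forall>g\<in>hom X C (prd X A B).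
           cmp X C (prd X A B) A (add X C (prd X A B) f g) (pr0 X A B)
             = add X C A (cmp X C (prd X A B) A f (pr0 X A B)) (cmp X C (prd X A B) A g (pr0 X A B)) \<and>
           cmp X C (prd X A B) B (add X C (prd X A B) f g) (pr1 X A B)
             = add X C B (cmp X C (prd X A B) B f (pr1 X A B)) (cmp X C (prd X A B) B g (pr1 X A B))) \<and>
        cmp X C (prd X A B) A (zro X C (prd X A B)) (pr0 X A B) = zro X C A \<and>
        cmp X C (prd X A B) B (zro X C (prd X A B)) (pr1 X A B) = zro X C B)"

definition is_CLAC :: "('o, 'm) clac \<Rightarrow> bool" where
  "is_CLAC X \<longleftrightarrow> is_category X \<and> has_finite_products X \<and> is_left_additive X
                  \<and> projections_additive X"

definition PO :: "('o, 'm) clac \<Rightarrow> 'o \<Rightarrow> 'o" where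
  "PO X A = prd X A A"

definition Pn :: "('o, 'm) clac \<Rightarrow> nat \<Rightarrow> 'o \<Rightarrow> 'o" where
  "Pn X n A = (PO X ^^ n) A"

definition tms :: "('o, 'm) clac \<Rightarrow> 'o \<Rightarrow> 'o \<Rightarrow> 'o \<Rightarrow> 'o \<Rightarrow> 'm \<Rightarrow> 'm \<Rightarrow> 'm" where
  "tms X A B A' B' a b =
     pair X (prd X A B) A' B' (cmp X (prd X A B) A A' (pr0 X A B) a)
                              (cmp X (prd X A B) B B' (pr1 X A B) b)"

definition PM :: "('o, 'm) clac \<Rightarrow> 'o \<Rightarrow> 'o \<Rightarrow> 'm \<Rightarrow> 'm" where
  "PM X A B h = tms X A A B B h h"

fun Pnm :: "('o, 'm) clac \<Rightarrow> nat \<Rightarrow> 'o \<Rightarrow> 'o \<Rightarrow> 'm \<Rightarrow> 'm" where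
  "Pnm X 0 A B h = h"
| "Pnm X (Suc n) A B h = PM X (Pn X n A) (Pn X n B) (Pnm X n A B h)"

definition pre_dseq :: "('o, 'm) clac \<Rightarrow> 'o \<Rightarrow> 'o \<Rightarrow> (nat \<Rightarrow> 'm) \<Rightarrow> bool" where
  "pre_dseq X A B f \<longleftrightarrow> (\<forall>n. f n \<in> hom X (Pn X n A) B)"

definition act :: "('o, 'm) clac \<Rightarrow> 'o \<Rightarrow> 'o \<Rightarrow> 'o \<Rightarrow> 'm \<Rightarrow> (nat \<Rightarrow> 'm) \<Rightarrow> nat \<Rightarrow> 'm" where
  "act X A' A B h f = (\<lambda>n. cmp X (Pn X n A') (Pn X n A) B (Pnm X n A' A h) (f n))"

definition Tseq :: "('o, 'm) clac \<Rightarrow> 'o \<Rightarrow> 'o \<Rightarrow> (nat \<Rightarrow> 'm) \<Rightarrow> nat \<Rightarrow> 'm" where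
  "Tseq X A B f = (\<lambda>n. pair X (Pn X n (PO X A)) B B
      (cmp X (Pn X n (PO X A)) (Pn X n A) B (Pnm X n (PO X A) A (pr0 X A A)) (f n))
      (f (Suc n)))"

fun Tn :: "('o, 'm) clac \<Rightarrow> nat \<Rightarrow> 'o \<Rightarrow> 'o \<Rightarrow> (nat \<Rightarrow> 'm) \<Rightarrow> nat \<Rightarrow> 'm" where
  "Tn X 0 A B f = f"
| "Tn X (Suc n) A B f = Tseq X (Pn X n A) (Pn X n B) (Tn X n A B f)"

definition Dk :: "nat \<Rightarrow> (nat \<Rightarrow> 'm) \<Rightarrow> nat \<Rightarrow> 'm" where
  "Dk k f = (\<lambda>n. f (n + k))"

fun iseq :: "('o, 'm) clac \<Rightarrow> 'o \<Rightarrow> nat \<Rightarrow> 'm" where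
  "iseq X C 0 = idm X C"
| "iseq X C (Suc n) = cmp X (Pn X (Suc n) C) (Pn X n C) C
                          (pr1 X (Pn X n C) (Pn X n C)) (iseq X C n)"

definition dcomp :: "('o, 'm) clac \<Rightarrow> 'o \<Rightarrow> 'o \<Rightarrow> 'o \<Rightarrow> (nat \<Rightarrow> 'm) \<Rightarrow> (nat \<Rightarrow> 'm) \<Rightarrow> nat \<Rightarrow> 'm" where
  "dcomp X A B C f g = (\<lambda>n. cmp X (Pn X n A) (Pn X n B) C (Tn X n A B f 0) (g n))"

definition dseq :: "('o, 'm) clac \<Rightarrow> 'o \<Rightarrow> 'o \<Rightarrow> (nat \<Rightarrow> 'm) \<Rightarrow> bool" where
  "dseq X A B f \<longleftrightarrow> pre_dseq X A B f \<and>
    (\<forall>n. let C = Pn X n A; PC = PO X C; PPC = PO X PC; CPC = prd X C PC;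
             i10 = pair X C C C (idm X C) (zro X C C);
             i01 = pair X C C C (zro X C C) (idm X C);
             D1 = Dk (Suc n) f; D2 = Dk (Suc (Suc n)) f;
             s = add X PC C (pr0 X C C) (pr1 X C C);
             ell = tms X C C PC PC i10 i01;
             cc = pair X PPC PC PC
                    (pair X PPC C C (cmp X PPC PC C (pr0 X PC PC) (pr0 X C C))
                                    (cmp X PPC PC C (pr1 X PC PC) (pr0 X C C)))
                    (pair X PPC C C (cmp X PPC PC C (pr0 X PC PC) (pr1 X C C))
                                    (cmp X PPC PC C (pr1 X PC PC) (pr1 X C C)))
         in act X C PC B i10 D1 = (\<lambda>m. zro X (Pn X m C) B)
          \<and> act X CPC PC B (tms X C PC C C (idm X C) s) D1
              = (\<lambda>m. add X (Pn X m CPC) B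
                        (act X CPC PC B (tms X C PC C C (idm X C) (pr0 X C C)) D1 m)
                        (act X CPC PC B (tms X C PC C C (idm X C) (pr1 X C C)) D1 m))
          \<and> act X PC PPC B ell D2 = D1
          \<and> act X PPC PPC B cc D2 = D2)"

definition DX :: "('o, 'm) clac \<Rightarrow> ('o, nat \<Rightarrow> 'm) clac" where
  "DX X = \<lparr> obj = obj X,
            hom = (\<lambda>A B. {f. dseq X A B f}),
            idm = iseq X,
            cmp = dcomp X,
            trm = trm X,
            bng = (\<lambda>A n. bng X (Pn X n A)),
            prd = prd X,
            pr0 = (\<lambda>A B n. cmp X (Pn X n (prd X A B)) (prd X A B) A
                              (iseq X (prd X A B) n) (pr0 X A B)),
            pr1 = (\<lambda>A B n. cmp X (Pn X n (prd X A B)) (prd X A B) B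
                              (iseq X (prd X A B) n) (pr1 X A B)),
            pair = (\<lambda>C A B f g n. pair X (Pn X n C) A B (f n) (g n)),
            zro = (\<lambda>A B n. zro X (Pn X n A) B),
            add = (\<lambda>A B f g n. add X (Pn X n A) B (f n) (g n)) \<rparr>"

end

theory Submission
  imports Defs
begin


lemma Pn_0[simp]: "Pn X 0 A = A" by (simp add: Pn_def)
lemma Pn_Suc[simp]: "Pn X (Suc n) A = prd X (Pn X n A) (Pn X n A)"
  by (simp add: Pn_def PO_def)
lemma Pn_prd[simp]: "Pn X n (prd X A A) = prd X (Pn X n A) (Pn X n A)"
  by (induct n) auto
lemma Pn_Pn[simp]: "Pn X n (Pn X k A) = Pn X (n+k) A"
  by (induct n) auto
declare PO_def[simp]

locale CL =
  fixes X :: "('o,'m) clac"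
  assumes CL: "is_CLAC X"
begin

lemma cat: "is_category X" and fp: "has_finite_products X" and la: "is_left_additive X"
  and pa: "projections_additive X"
  using CL unfolding is_CLAC_def by auto

lemma trm_obj[simp]: "trm X \<in> obj X" using fp by (simp add: has_finite_products_def)
lemma prd_obj[simp]: "A \<in> obj X \<Longrightarrow> B \<in> obj X \<Longrightarrow> prd X A B \<in> obj X"
  using fp by (simp add: has_finite_products_def)
lemma Pn_obj[simp]: "A \<in> obj X \<Longrightarrow> Pn X n A \<in> obj X"
  by (induct n) auto

lemma idm_hom[simp]: "A \<in> obj X \<Longrightarrow> A' = A \<Longrightarrow> A'' = A \<Longrightarrow> idm X A \<in> hom X A' A''"
  using cat by (simp add: is_category_def)
lemma cmp_hom[simp]: "A' = A \<Longrightarrow> C' = C \<Longrightarrow> A \<in> obj X \<Longrightarrow> B \<in> obj X \<Longrightarrow> C \<in> obj X \<Longrightarrow>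
   f \<in> hom X A B \<Longrightarrow> g \<in> hom X B C \<Longrightarrow> cmp X A B C f g \<in> hom X A' C'"
  using cat by (simp add: is_category_def)
lemma pr0_hom[simp]: "A \<in> obj X \<Longrightarrow> B \<in> obj X \<Longrightarrow> P = prd X A B \<Longrightarrow> A' = A \<Longrightarrow> pr0 X A B \<in> hom X P A'"
  using fp by (simp add: has_finite_products_def)
lemma pr1_hom[simp]: "A \<in> obj X \<Longrightarrow> B \<in> obj X \<Longrightarrow> P = prd X A B \<Longrightarrow> B' = B \<Longrightarrow> pr1 X A B \<in> hom X P B'"
  using fp by (simp add: has_finite_products_def)
lemma pair_hom[simp]: "C' = C \<Longrightarrow> P = prd X A B \<Longrightarrow> C \<in> obj X \<Longrightarrow> A \<in> obj X \<Longrightarrow> B \<in> obj X \<Longrightarrow>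
   f \<in> hom X C A \<Longrightarrow> g \<in> hom X C B \<Longrightarrow> pair X C A B f g \<in> hom X C' P"
  using fp by (simp add: has_finite_products_def)
lemma zro_hom[simp]: "A' = A \<Longrightarrow> B' = B \<Longrightarrow> A \<in> obj X \<Longrightarrow> B \<in> obj X \<Longrightarrow> zro X A B \<in> hom X A' B'"
  using la by (simp add: is_left_additive_def)
lemma add_hom[simp]: "A' = A \<Longrightarrow> B' = B \<Longrightarrow> A \<in> obj X \<Longrightarrow> B \<in> obj X \<Longrightarrow> f \<in> hom X A B \<Longrightarrow> g \<in> hom X A B
   \<Longrightarrow> add X A B f g \<in> hom X A' B'"
  using la by (simp add: is_left_additive_def)
lemma bng_hom[simp]: "A' = A \<Longrightarrow> T = trm X \<Longrightarrow> A \<in> obj X \<Longrightarrow> bng X A \<in> hom X A' T"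
  using fp by (simp add: has_finite_products_def)
lemma bng_uniq: "A \<in> obj X \<Longrightarrow> f \<in> hom X A (trm X) \<Longrightarrow> f = bng X A"
  using fp by (simp add: has_finite_products_def)

lemma id_l[simp]: "A \<in> obj X \<Longrightarrow> B \<in> obj X \<Longrightarrow> f \<in> hom X A B \<Longrightarrow> cmp X A A B (idm X A) f = f"
  using cat by (simp add: is_category_def)
lemma id_r[simp]: "A \<in> obj X \<Longrightarrow> B \<in> obj X \<Longrightarrow> f \<in> hom X A B \<Longrightarrow> cmp X A B B f (idm X B) = f"
  using cat by (simp add: is_category_def)
lemma assoc[simp]: "A \<in> obj X \<Longrightarrow> B \<in> obj X \<Longrightarrow> C \<in> obj X \<Longrightarrow> D \<in> obj X \<Longrightarrow>
  f \<in> hom X A B \<Longrightarrow> g \<in> hom X B C \<Longrightarrow> h \<in> hom X C D \<Longrightarrow>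
  cmp X A C D (cmp X A B C f g) h = cmp X A B D f (cmp X B C D g h)"
  using cat by (simp add: is_category_def)

lemma pair_pr0[simp]: "C \<in> obj X \<Longrightarrow> A \<in> obj X \<Longrightarrow> B \<in> obj X \<Longrightarrow> f \<in> hom X C A \<Longrightarrow> g \<in> hom X C B \<Longrightarrow>
  cmp X C (prd X A B) A (pair X C A B f g) (pr0 X A B) = f"
  using fp by (simp add: has_finite_products_def)
lemma pair_pr1[simp]: "C \<in> obj X \<Longrightarrow> A \<in> obj X \<Longrightarrow> B \<in> obj X \<Longrightarrow> f \<in> hom X C A \<Longrightarrow> g \<in> hom X C B \<Longrightarrow>
  cmp X C (prd X A B) B (pair X C A B f g) (pr1 X A B) = g"
  using fp by (simp add: has_finite_products_def)
lemma pair_eta: "C \<in> obj X \<Longrightarrow> A \<in> obj X \<Longrightarrow> B \<in> obj X \<Longrightarrow> h \<in> hom X C (prd X A B) \<Longrightarrow>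
  pair X C A B (cmp X C (prd X A B) A h (pr0 X A B)) (cmp X C (prd X A B) B h (pr1 X A B)) = h"
  using fp by (simp add: has_finite_products_def)

lemma pair_pr0'[simp]: "C \<in> obj X \<Longrightarrow> A \<in> obj X \<Longrightarrow> B \<in> obj X \<Longrightarrow> D \<in> obj X \<Longrightarrow> f \<in> hom X C A \<Longrightarrow> g \<in> hom X C B \<Longrightarrow>
  h \<in> hom X A D \<Longrightarrow>
  cmp X C (prd X A B) D (pair X C A B f g) (cmp X (prd X A B) A D (pr0 X A B) h) = cmp X C A D f h"
  by (simp flip: assoc)
lemma pair_pr1'[simp]: "C \<in> obj X \<Longrightarrow> A \<in> obj X \<Longrightarrow> B \<in> obj X \<Longrightarrow> D \<in> obj X \<Longrightarrow> f \<in> hom X C A \<Longrightarrow> g \<in> hom X C B \<Longrightarrow>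
  h \<in> hom X B D \<Longrightarrow>
  cmp X C (prd X A B) D (pair X C A B f g) (cmp X (prd X A B) B D (pr1 X A B) h) = cmp X C B D g h"
  by (simp flip: assoc)

lemma prod_ext: "C \<in> obj X \<Longrightarrow> A \<in> obj X \<Longrightarrow> B \<in> obj X \<Longrightarrow> h \<in> hom X C (prd X A B) \<Longrightarrow> k \<in> hom X C (prd X A B) \<Longrightarrow>
  cmp X C (prd X A B) A h (pr0 X A B) = cmp X C (prd X A B) A k (pr0 X A B) \<Longrightarrow>
  cmp X C (prd X A B) B h (pr1 X A B) = cmp X C (prd X A B) B k (pr1 X A B) \<Longrightarrow> h = k"
  by (metis pair_eta)

lemma pair_eq_iff[simp]: "C \<in> obj X \<Longrightarrow> A \<in> obj X \<Longrightarrow> B \<in> obj X \<Longrightarrow> f \<in> hom X C A \<Longrightarrow> g \<in> hom X C B \<Longrightarrow>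
  f' \<in> hom X C A \<Longrightarrow> g' \<in> hom X C B \<Longrightarrow>
  pair X C A B f g = pair X C A B f' g' \<longleftrightarrow> f = f' \<and> g = g'"
  by (metis pair_pr0 pair_pr1)

lemma cmp_pair[simp]: "D \<in> obj X \<Longrightarrow> C \<in> obj X \<Longrightarrow> A \<in> obj X \<Longrightarrow> B \<in> obj X \<Longrightarrow> h \<in> hom X D C \<Longrightarrow>
  f \<in> hom X C A \<Longrightarrow> g \<in> hom X C B \<Longrightarrow>
  cmp X D C (prd X A B) h (pair X C A B f g) = pair X D A B (cmp X D C A h f) (cmp X D C B h g)"
  by (rule prod_ext[of D A B]) simp_all

lemma pair_pr_id[simp]: "A \<in> obj X \<Longrightarrow> B \<in> obj X \<Longrightarrow> pair X (prd X A B) A B (pr0 X A B) (pr1 X A B) = idm X (prd X A B)"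
  by (rule prod_ext[of "prd X A B" A B]) auto

lemma pair_eta'[simp]: "C \<in> obj X \<Longrightarrow> A \<in> obj X \<Longrightarrow> B \<in> obj X \<Longrightarrow> h \<in> hom X C (prd X A B) \<Longrightarrow>
  pair X C A B (cmp X C (prd X A B) A h (pr0 X A B)) (cmp X C (prd X A B) B h (pr1 X A B)) = h"
  by (rule pair_eta)


lemma add_assoc: "A \<in> obj X \<Longrightarrow> B \<in> obj X \<Longrightarrow> f \<in> hom X A B \<Longrightarrow> g \<in> hom X A B \<Longrightarrow> h \<in> hom X A B \<Longrightarrow>
  add X A B (add X A B f g) h = add X A B f (add X A B g h)"
  using la unfolding is_left_additive_def by blast
lemma add_comm: "A \<in> obj X \<Longrightarrow> B \<in> obj X \<Longrightarrow> f \<in> hom X A B \<Longrightarrow> g \<in> hom X A B \<Longrightarrow>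
  add X A B f g = add X A B g f"
  using la unfolding is_left_additive_def by blast
lemma add_zro_r[simp]: "A \<in> obj X \<Longrightarrow> B \<in> obj X \<Longrightarrow> f \<in> hom X A B \<Longrightarrow> add X A B f (zro X A B) = f"
  using la by (simp add: is_left_additive_def)
lemma add_zro_l[simp]: "A \<in> obj X \<Longrightarrow> B \<in> obj X \<Longrightarrow> f \<in> hom X A B \<Longrightarrow> add X A B (zro X A B) f = f"
  by (subst add_comm) auto
lemma add_left_comm: "A \<in> obj X \<Longrightarrow> B \<in> obj X \<Longrightarrow> f \<in> hom X A B \<Longrightarrow> g \<in> hom X A B \<Longrightarrow> h \<in> hom X A B \<Longrightarrow>
  add X A B f (add X A B g h) = add X A B g (add X A B f h)"
  by (metis add_assoc add_comm)
lemma add4: "A \<in> obj X \<Longrightarrow> B \<in> obj X \<Longrightarrow> a \<in> hom X A B \<Longrightarrow> b \<in> hom X A B \<Longrightarrow> c \<in> hom X A B \<Longrightarrow> d \<in> hom X A B \<Longrightarrow>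
  add X A B (add X A B a b) (add X A B c d) = add X A B (add X A B a c) (add X A B b d)"
  by (simp add: add_assoc add_left_comm[of A B b c d])

lemma cmp_add_r[simp]: "A \<in> obj X \<Longrightarrow> B \<in> obj X \<Longrightarrow> C \<in> obj X \<Longrightarrow> f \<in> hom X A B \<Longrightarrow> g \<in> hom X B C \<Longrightarrow> h \<in> hom X B C \<Longrightarrow>
  cmp X A B C f (add X B C g h) = add X A C (cmp X A B C f g) (cmp X A B C f h)"
  using la by (simp add: is_left_additive_def)
lemma cmp_zro_r[simp]: "A \<in> obj X \<Longrightarrow> B \<in> obj X \<Longrightarrow> C \<in> obj X \<Longrightarrow> f \<in> hom X A B \<Longrightarrow>
  cmp X A B C f (zro X B C) = zro X A C"
  using la by (simp add: is_left_additive_def)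
lemma add_pr0[simp]: "A \<in> obj X \<Longrightarrow> B \<in> obj X \<Longrightarrow> C \<in> obj X \<Longrightarrow> f \<in> hom X C (prd X A B) \<Longrightarrow> g \<in> hom X C (prd X A B) \<Longrightarrow>
  cmp X C (prd X A B) A (add X C (prd X A B) f g) (pr0 X A B) = add X C A (cmp X C (prd X A B) A f (pr0 X A B)) (cmp X C (prd X A B) A g (pr0 X A B))"
  using pa by (simp add: projections_additive_def)
lemma add_pr1[simp]: "A \<in> obj X \<Longrightarrow> B \<in> obj X \<Longrightarrow> C \<in> obj X \<Longrightarrow> f \<in> hom X C (prd X A B) \<Longrightarrow> g \<in> hom X C (prd X A B) \<Longrightarrow>
  cmp X C (prd X A B) B (add X C (prd X A B) f g) (pr1 X A B) = add X C B (cmp X C (prd X A B) B f (pr1 X A B)) (cmp X C (prd X A B) B g (pr1 X A B))"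
  using pa by (simp add: projections_additive_def)
lemma zro_pr0[simp]: "A \<in> obj X \<Longrightarrow> B \<in> obj X \<Longrightarrow> C \<in> obj X \<Longrightarrow> cmp X C (prd X A B) A (zro X C (prd X A B)) (pr0 X A B) = zro X C A"
  using pa by (simp add: projections_additive_def)
lemma zro_pr1[simp]: "A \<in> obj X \<Longrightarrow> B \<in> obj X \<Longrightarrow> C \<in> obj X \<Longrightarrow> cmp X C (prd X A B) B (zro X C (prd X A B)) (pr1 X A B) = zro X C B"
  using pa by (simp add: projections_additive_def)

lemma pair_add[simp]: "C \<in> obj X \<Longrightarrow> A \<in> obj X \<Longrightarrow> B \<in> obj X \<Longrightarrow> f \<in> hom X C A \<Longrightarrow> g \<in> hom X C B \<Longrightarrow>
  f' \<in> hom X C A \<Longrightarrow> g' \<in> hom X C B \<Longrightarrow>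
  add X C (prd X A B) (pair X C A B f g) (pair X C A B f' g') = pair X C A B (add X C A f f') (add X C B g g')"
  by (rule prod_ext[of C A B]) auto
lemma pair_zro[simp]: "C \<in> obj X \<Longrightarrow> A \<in> obj X \<Longrightarrow> B \<in> obj X \<Longrightarrow>
  pair X C A B (zro X C A) (zro X C B) = zro X C (prd X A B)"
  by (rule prod_ext[of C A B]) auto

definition addm :: "'o \<Rightarrow> 'o \<Rightarrow> 'm \<Rightarrow> bool" where
  "addm A B h \<longleftrightarrow> h \<in> hom X A B \<and>
     (\<forall>Z\<in>obj X. \<forall>u\<in>hom X Z A. \<forall>v\<in>hom X Z A. cmp X Z A B (add X Z A u v) h = add X Z B (cmp X Z A B u h) (cmp X Z A B v h)) \<and>
     (\<forall>Z\<in>obj X. cmp X Z A B (zro X Z A) h = zro X Z B)"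

lemma addm_hom: "addm A B h \<Longrightarrow> h \<in> hom X A B" by (simp add: addm_def)
lemma addm_add: "addm A B h \<Longrightarrow> Z \<in> obj X \<Longrightarrow> u \<in> hom X Z A \<Longrightarrow> v \<in> hom X Z A \<Longrightarrow>
  cmp X Z A B (add X Z A u v) h = add X Z B (cmp X Z A B u h) (cmp X Z A B v h)"
  by (simp add: addm_def)
lemma addm_zro: "addm A B h \<Longrightarrow> Z \<in> obj X \<Longrightarrow> cmp X Z A B (zro X Z A) h = zro X Z B"
  by (simp add: addm_def)

lemma addm_pr0: "A \<in> obj X \<Longrightarrow> B \<in> obj X \<Longrightarrow> addm (prd X A B) A (pr0 X A B)"
  by (simp add: addm_def)
lemma addm_pr1: "A \<in> obj X \<Longrightarrow> B \<in> obj X \<Longrightarrow> addm (prd X A B) B (pr1 X A B)"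
  by (simp add: addm_def)
lemma addm_idm: "A \<in> obj X \<Longrightarrow> addm A A (idm X A)"
  by (simp add: addm_def)
lemma addm_cmp: "A \<in> obj X \<Longrightarrow> B \<in> obj X \<Longrightarrow> C \<in> obj X \<Longrightarrow> addm A B h \<Longrightarrow> addm B C k \<Longrightarrow> addm A C (cmp X A B C h k)"
  using addm_hom[of A B h] addm_hom[of B C k]
  by (auto simp add: addm_def simp flip: assoc)
lemma addm_pair: "C \<in> obj X \<Longrightarrow> A \<in> obj X \<Longrightarrow> B \<in> obj X \<Longrightarrow> addm C A f \<Longrightarrow> addm C B g \<Longrightarrow> addm C (prd X A B) (pair X C A B f g)"
  using addm_hom[of C A f] addm_hom[of C B g]
  by (auto simp add: addm_def)
lemma addm_addm: "A \<in> obj X \<Longrightarrow> B \<in> obj X \<Longrightarrow> addm A B f \<Longrightarrow> addm A B g \<Longrightarrow> addm A B (add X A B f g)"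
  using addm_hom[of A B f] addm_hom[of A B g]
  apply (auto simp add: addm_def)
  apply (subst add4) apply auto
  done

lemma tms_hom[simp]: "P = prd X A B \<Longrightarrow> Q = prd X A' B' \<Longrightarrow> A \<in> obj X \<Longrightarrow> B \<in> obj X \<Longrightarrow> A' \<in> obj X \<Longrightarrow> B' \<in> obj X \<Longrightarrow>
  a \<in> hom X A A' \<Longrightarrow> b \<in> hom X B B' \<Longrightarrow> tms X A B A' B' a b \<in> hom X P Q"
  by (simp add: tms_def)
lemma PM_hom[simp]: "P = prd X A A \<Longrightarrow> Q = prd X B B \<Longrightarrow> A \<in> obj X \<Longrightarrow> B \<in> obj X \<Longrightarrow>
  h \<in> hom X A B \<Longrightarrow> PM X A B h \<in> hom X P Q"
  by (simp add: PM_def)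
lemma addm_tms: "A \<in> obj X \<Longrightarrow> B \<in> obj X \<Longrightarrow> A' \<in> obj X \<Longrightarrow> B' \<in> obj X \<Longrightarrow> addm A A' a \<Longrightarrow> addm B B' b \<Longrightarrow>
  addm (prd X A B) (prd X A' B') (tms X A B A' B' a b)"
  unfolding tms_def
  by (intro addm_pair addm_cmp addm_pr0 addm_pr1) auto
lemma addm_PM: "A \<in> obj X \<Longrightarrow> B \<in> obj X \<Longrightarrow> addm A B h \<Longrightarrow> addm (prd X A A) (prd X B B) (PM X A B h)"
  unfolding PM_def by (rule addm_tms) auto

lemma Pnm_hom[simp]: "P = Pn X n A \<Longrightarrow> Q = Pn X n B \<Longrightarrow> A \<in> obj X \<Longrightarrow> B \<in> obj X \<Longrightarrow>
  h \<in> hom X A B \<Longrightarrow> Pnm X n A B h \<in> hom X P Q"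
  by (induct n arbitrary: P Q) auto
lemma addm_Pnm: "A \<in> obj X \<Longrightarrow> B \<in> obj X \<Longrightarrow> addm A B h \<Longrightarrow> addm (Pn X n A) (Pn X n B) (Pnm X n A B h)"
  by (induct n) (auto intro: addm_PM)

lemma tms_cmp: "A \<in> obj X \<Longrightarrow> B \<in> obj X \<Longrightarrow> A' \<in> obj X \<Longrightarrow> B' \<in> obj X \<Longrightarrow> A'' \<in> obj X \<Longrightarrow> B'' \<in> obj X \<Longrightarrow>
  a \<in> hom X A A' \<Longrightarrow> b \<in> hom X B B' \<Longrightarrow> c \<in> hom X A' A'' \<Longrightarrow> d \<in> hom X B' B'' \<Longrightarrow>
  cmp X (prd X A B) (prd X A' B') (prd X A'' B'') (tms X A B A' B' a b) (tms X A' B' A'' B'' c d)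
  = tms X A B A'' B'' (cmp X A A' A'' a c) (cmp X B B' B'' b d)"
  by (simp add: tms_def)
lemma PM_cmp: "A \<in> obj X \<Longrightarrow> B \<in> obj X \<Longrightarrow> C \<in> obj X \<Longrightarrow> h \<in> hom X A B \<Longrightarrow> k \<in> hom X B C \<Longrightarrow>
  PM X A C (cmp X A B C h k) = cmp X (prd X A A) (prd X B B) (prd X C C) (PM X A B h) (PM X B C k)"
  by (simp add: PM_def tms_cmp)
lemma PM_id[simp]: "A \<in> obj X \<Longrightarrow> PM X A A (idm X A) = idm X (prd X A A)"
  by (simp add: PM_def tms_def)
lemma Pnm_id[simp]: "A \<in> obj X \<Longrightarrow> Pnm X n A A (idm X A) = idm X (Pn X n A)"
  by (induct n) auto
lemma Pnm_cmp: "A \<in> obj X \<Longrightarrow> B \<in> obj X \<Longrightarrow> C \<in> obj X \<Longrightarrow> h \<in> hom X A B \<Longrightarrow> k \<in> hom X B C \<Longrightarrow>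
  Pnm X n A C (cmp X A B C h k) = cmp X (Pn X n A) (Pn X n B) (Pn X n C) (Pnm X n A B h) (Pnm X n B C k)"
  by (induct n) (auto simp: PM_cmp)

end

lemma Pnm_Pnm[simp]: "Pnm X n (Pn X k A) (Pn X k B) (Pnm X k A B h) = Pnm X (n+k) A B h"
  by (induct n) auto
lemma Pnm_PM[simp]: "Pnm X n (prd X A A) (prd X B B) (PM X A B h) = Pnm X (Suc n) A B h"
  using Pnm_Pnm[of X n 1 A B h] by simp




definition spair :: "('o,'m) clac \<Rightarrow> 'o \<Rightarrow> 'o \<Rightarrow> 'o \<Rightarrow> (nat \<Rightarrow> 'm) \<Rightarrow> (nat \<Rightarrow> 'm) \<Rightarrow> nat \<Rightarrow> 'm" where
  "spair X C A B U V = (\<lambda>n. pair X (Pn X n C) A B (U n) (V n))"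
definition sadd :: "('o,'m) clac \<Rightarrow> 'o \<Rightarrow> 'o \<Rightarrow> (nat \<Rightarrow> 'm) \<Rightarrow> (nat \<Rightarrow> 'm) \<Rightarrow> nat \<Rightarrow> 'm" where
  "sadd X A B U V = (\<lambda>n. add X (Pn X n A) B (U n) (V n))"
definition szro :: "('o,'m) clac \<Rightarrow> 'o \<Rightarrow> 'o \<Rightarrow> nat \<Rightarrow> 'm" where
  "szro X A B = (\<lambda>n. zro X (Pn X n A) B)"
definition post :: "('o,'m) clac \<Rightarrow> 'o \<Rightarrow> 'o \<Rightarrow> 'o \<Rightarrow> (nat \<Rightarrow> 'm) \<Rightarrow> 'm \<Rightarrow> nat \<Rightarrow> 'm" where
  "post X A B B' U h = (\<lambda>n. cmp X (Pn X n A) B B' (U n) h)"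

definition i10 :: "('o,'m) clac \<Rightarrow> 'o \<Rightarrow> 'm" where
  "i10 X C = pair X C C C (idm X C) (zro X C C)"
definition i01 :: "('o,'m) clac \<Rightarrow> 'o \<Rightarrow> 'm" where
  "i01 X C = pair X C C C (zro X C C) (idm X C)"
definition ssum :: "('o,'m) clac \<Rightarrow> 'o \<Rightarrow> 'm" where
  "ssum X C = add X (prd X C C) C (pr0 X C C) (pr1 X C C)"
definition s1 :: "('o,'m) clac \<Rightarrow> 'o \<Rightarrow> 'm \<Rightarrow> 'm" where
  "s1 X C k = tms X C (prd X C C) C C (idm X C) k"
definition ellm :: "('o,'m) clac \<Rightarrow> 'o \<Rightarrow> 'm" where
  "ellm X C = tms X C C (prd X C C) (prd X C C) (i10 X C) (i01 X C)"
definition ccm :: "('o,'m) clac \<Rightarrow> 'o \<Rightarrow> 'm" where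
  "ccm X C = pair X (prd X (prd X C C) (prd X C C)) (prd X C C) (prd X C C)
      (pair X (prd X (prd X C C) (prd X C C)) C C
         (cmp X (prd X (prd X C C) (prd X C C)) (prd X C C) C (pr0 X (prd X C C) (prd X C C)) (pr0 X C C))
         (cmp X (prd X (prd X C C) (prd X C C)) (prd X C C) C (pr1 X (prd X C C) (prd X C C)) (pr0 X C C)))
      (pair X (prd X (prd X C C) (prd X C C)) C C
         (cmp X (prd X (prd X C C) (prd X C C)) (prd X C C) C (pr0 X (prd X C C) (prd X C C)) (pr1 X C C))
         (cmp X (prd X (prd X C C) (prd X C C)) (prd X C C) C (pr1 X (prd X C C) (prd X C C)) (pr1 X C C)))"

definition Lc :: "('o,'m) clac \<Rightarrow> 'o \<Rightarrow> 'o \<Rightarrow> (nat \<Rightarrow> 'm) \<Rightarrow> bool" where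
  "Lc X C B U \<longleftrightarrow>
     act X C (prd X C C) B (i10 X C) (Dk (Suc 0) U) = szro X C B \<and>
     act X (prd X C (prd X C C)) (prd X C C) B (s1 X C (ssum X C)) (Dk (Suc 0) U)
       = sadd X (prd X C (prd X C C)) B
           (act X (prd X C (prd X C C)) (prd X C C) B (s1 X C (pr0 X C C)) (Dk (Suc 0) U))
           (act X (prd X C (prd X C C)) (prd X C C) B (s1 X C (pr1 X C C)) (Dk (Suc 0) U)) \<and>
     act X (prd X C C) (prd X (prd X C C) (prd X C C)) B (ellm X C) (Dk (Suc (Suc 0)) U) = Dk (Suc 0) U \<and>
     act X (prd X (prd X C C) (prd X C C)) (prd X (prd X C C) (prd X C C)) B (ccm X C) (Dk (Suc (Suc 0)) U)
       = Dk (Suc (Suc 0)) U"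

lemma dseq_iff: "dseq X A B f \<longleftrightarrow> pre_dseq X A B f \<and> (\<forall>n. Lc X (Pn X n A) B (Dk n f))"
  unfolding dseq_def Lc_def Let_def i10_def i01_def ssum_def s1_def ellm_def ccm_def szro_def sadd_def
  by (simp add: Dk_def add.commute add.left_commute)

lemma Dk_Dk[simp]: "Dk j (Dk k F) = Dk (j+k) F"
  by (simp add: Dk_def add.assoc)
lemma Dk_0[simp]: "Dk 0 F = F" by (simp add: Dk_def)
lemma Dk_app: "Dk k F n = F (n+k)" by (simp add: Dk_def)

lemma Tn_Tn[simp]: "Tn X n (Pn X k A) (Pn X k B) (Tn X k A B F) = Tn X (n+k) A B F"
  by (induct n) auto
lemma Tn_Tseq[simp]: "Tn X n (prd X A A) (prd X B B) (Tseq X A B F) = Tn X (Suc n) A B F"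
  using Tn_Tn[of X n 1 A B F] by simp

context CL begin

lemma pre_dseqD: "pre_dseq X A B F \<Longrightarrow> P = Pn X n A \<Longrightarrow> B' = B \<Longrightarrow> F n \<in> hom X P B'"
  by (simp add: pre_dseq_def)

lemma pre_dseqI: "(\<And>n. F n \<in> hom X (Pn X n A) B) \<Longrightarrow> pre_dseq X A B F"
  by (simp add: pre_dseq_def)

lemma act_hom[simp]: "P = Pn X n A' \<Longrightarrow> B'' = B \<Longrightarrow> A' \<in> obj X \<Longrightarrow> A \<in> obj X \<Longrightarrow> B \<in> obj X \<Longrightarrow>
   h \<in> hom X A' A \<Longrightarrow> pre_dseq X A B F \<Longrightarrow> act X A' A B h F n \<in> hom X P B''"
  by (simp add: act_def pre_dseqD[of A B F])
lemma spair_hom[simp]: "P = Pn X n C \<Longrightarrow> Q = prd X A B \<Longrightarrow> C \<in> obj X \<Longrightarrow> A \<in> obj X \<Longrightarrow> B \<in> obj X \<Longrightarrow>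
   pre_dseq X C A U \<Longrightarrow> pre_dseq X C B V \<Longrightarrow> spair X C A B U V n \<in> hom X P Q"
  by (simp add: spair_def pre_dseqD[of C A U] pre_dseqD[of C B V])
lemma sadd_hom[simp]: "P = Pn X n A \<Longrightarrow> B' = B \<Longrightarrow> A \<in> obj X \<Longrightarrow> B \<in> obj X \<Longrightarrow>
   pre_dseq X A B U \<Longrightarrow> pre_dseq X A B V \<Longrightarrow> sadd X A B U V n \<in> hom X P B'"
  by (simp add: sadd_def pre_dseqD[of A B U] pre_dseqD[of A B V])
lemma szro_hom[simp]: "P = Pn X n A \<Longrightarrow> B' = B \<Longrightarrow> A \<in> obj X \<Longrightarrow> B \<in> obj X \<Longrightarrow>
   szro X A B n \<in> hom X P B'"
  by (simp add: szro_def)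
lemma post_hom[simp]: "P = Pn X n A \<Longrightarrow> B'' = B' \<Longrightarrow> A \<in> obj X \<Longrightarrow> B \<in> obj X \<Longrightarrow> B' \<in> obj X \<Longrightarrow>
   pre_dseq X A B U \<Longrightarrow> h \<in> hom X B B' \<Longrightarrow> post X A B B' U h n \<in> hom X P B''"
  by (simp add: post_def pre_dseqD[of A B U])
lemma Tseq_hom[simp]: "P = Pn X n (prd X A A) \<Longrightarrow> Q = prd X B B \<Longrightarrow> A \<in> obj X \<Longrightarrow> B \<in> obj X \<Longrightarrow>
   pre_dseq X A B U \<Longrightarrow> Tseq X A B U n \<in> hom X P Q"
  by (simp add: Tseq_def pre_dseqD[of A B U])
lemma Tn_hom[simp]: "P = Pn X n (Pn X k A) \<Longrightarrow> Q = Pn X k B \<Longrightarrow> A \<in> obj X \<Longrightarrow> B \<in> obj X \<Longrightarrow>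
   pre_dseq X A B U \<Longrightarrow> Tn X k A B U n \<in> hom X P Q"
proof (induct k arbitrary: n P Q)
  case 0 then show ?case by (simp add: pre_dseqD[of A B U])
next
  case (Suc k)
  have "pre_dseq X (Pn X k A) (Pn X k B) (Tn X k A B U)"
    by (rule pre_dseqI) (use Suc in simp)
  then show ?case using Suc by simp
qed
lemma dcomp_hom[simp]: "P = Pn X n A \<Longrightarrow> C' = C \<Longrightarrow> A \<in> obj X \<Longrightarrow> B \<in> obj X \<Longrightarrow> C \<in> obj X \<Longrightarrow>
   pre_dseq X A B U \<Longrightarrow> pre_dseq X B C V \<Longrightarrow> dcomp X A B C U V n \<in> hom X P C'"
  by (simp add: dcomp_def pre_dseqD[of B C V])
lemma iseq_hom[simp]: "A' = Pn X n A \<Longrightarrow> A'' = A \<Longrightarrow> A \<in> obj X \<Longrightarrow> iseq X A n \<in> hom X A' A''"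
  by (induct n arbitrary: A') auto
lemma Dk_hom[simp]: "P = Pn X n (Pn X k A) \<Longrightarrow> B' = B \<Longrightarrow> pre_dseq X A B U \<Longrightarrow> Dk k U n \<in> hom X P B'"
  by (simp add: pre_dseqD[of A B U] Dk_def)

lemma pre_act[simp]: "A'' = A' \<Longrightarrow> B'' = B \<Longrightarrow> A' \<in> obj X \<Longrightarrow> A \<in> obj X \<Longrightarrow> B \<in> obj X \<Longrightarrow>
   h \<in> hom X A' A \<Longrightarrow> pre_dseq X A B F \<Longrightarrow> pre_dseq X A'' B'' (act X A' A B h F)"
  by (rule pre_dseqI) simp
lemma pre_spair[simp]: "C' = C \<Longrightarrow> P = prd X A B \<Longrightarrow> C \<in> obj X \<Longrightarrow> A \<in> obj X \<Longrightarrow> B \<in> obj X \<Longrightarrow>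
   pre_dseq X C A U \<Longrightarrow> pre_dseq X C B V \<Longrightarrow> pre_dseq X C' P (spair X C A B U V)"
  by (rule pre_dseqI) simp
lemma pre_sadd[simp]: "A' = A \<Longrightarrow> B' = B \<Longrightarrow> A \<in> obj X \<Longrightarrow> B \<in> obj X \<Longrightarrow>
   pre_dseq X A B U \<Longrightarrow> pre_dseq X A B V \<Longrightarrow> pre_dseq X A' B' (sadd X A B U V)"
  by (rule pre_dseqI) simp
lemma pre_szro[simp]: "A' = A \<Longrightarrow> B' = B \<Longrightarrow> A \<in> obj X \<Longrightarrow> B \<in> obj X \<Longrightarrow>
   pre_dseq X A' B' (szro X A B)"
  by (rule pre_dseqI) simp
lemma pre_post[simp]: "A' = A \<Longrightarrow> B'' = B' \<Longrightarrow> A \<in> obj X \<Longrightarrow> B \<in> obj X \<Longrightarrow> B' \<in> obj X \<Longrightarrow>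
   pre_dseq X A B U \<Longrightarrow> h \<in> hom X B B' \<Longrightarrow> pre_dseq X A' B'' (post X A B B' U h)"
  by (rule pre_dseqI) simp
lemma pre_Dk[simp]: "A' = Pn X k A \<Longrightarrow> B' = B \<Longrightarrow>
   pre_dseq X A B U \<Longrightarrow> pre_dseq X A' B' (Dk k U)"
  by (rule pre_dseqI) simp
lemma pre_Tseq[simp]: "A' = prd X A A \<Longrightarrow> B' = prd X B B \<Longrightarrow> A \<in> obj X \<Longrightarrow> B \<in> obj X \<Longrightarrow>
   pre_dseq X A B U \<Longrightarrow> pre_dseq X A' B' (Tseq X A B U)"
  by (rule pre_dseqI) simp
lemma pre_Tn[simp]: "A' = Pn X k A \<Longrightarrow> B' = Pn X k B \<Longrightarrow> A \<in> obj X \<Longrightarrow> B \<in> obj X \<Longrightarrow>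
   pre_dseq X A B U \<Longrightarrow> pre_dseq X A' B' (Tn X k A B U)"
  by (rule pre_dseqI) simp
lemma pre_dcomp[simp]: "A' = A \<Longrightarrow> C' = C \<Longrightarrow> A \<in> obj X \<Longrightarrow> B \<in> obj X \<Longrightarrow> C \<in> obj X \<Longrightarrow>
   pre_dseq X A B U \<Longrightarrow> pre_dseq X B C V \<Longrightarrow> pre_dseq X A' C' (dcomp X A B C U V)"
  by (rule pre_dseqI) simp
lemma pre_iseq[simp]: "A' = A \<Longrightarrow> A'' = A \<Longrightarrow> A \<in> obj X \<Longrightarrow> pre_dseq X A' A'' (iseq X A)"
  by (rule pre_dseqI) simp


lemma act_act: "A0 \<in> obj X \<Longrightarrow> A1 \<in> obj X \<Longrightarrow> A2 \<in> obj X \<Longrightarrow> B \<in> obj X \<Longrightarrow> h \<in> hom X A0 A1 \<Longrightarrow> h' \<in> hom X A1 A2 \<Longrightarrow>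
  pre_dseq X A2 B F \<Longrightarrow> act X A0 A1 B h (act X A1 A2 B h' F) = act X A0 A2 B (cmp X A0 A1 A2 h h') F"
  by (rule ext) (simp add: act_def Pnm_cmp pre_dseqD[of A2 B F])
lemma act_id[simp]: "A \<in> obj X \<Longrightarrow> B \<in> obj X \<Longrightarrow> pre_dseq X A B F \<Longrightarrow> act X A A B (idm X A) F = F"
  by (rule ext) (simp add: act_def pre_dseqD[of A B F])
lemma act_spair[simp]: "A' \<in> obj X \<Longrightarrow> A \<in> obj X \<Longrightarrow> B1 \<in> obj X \<Longrightarrow> B2 \<in> obj X \<Longrightarrow> h \<in> hom X A' A \<Longrightarrow>
  pre_dseq X A B1 U \<Longrightarrow> pre_dseq X A B2 V \<Longrightarrow>
  act X A' A (prd X B1 B2) h (spair X A B1 B2 U V) = spair X A' B1 B2 (act X A' A B1 h U) (act X A' A B2 h V)"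
  by (rule ext) (simp add: act_def spair_def pre_dseqD[of A B1 U] pre_dseqD[of A B2 V])
lemma act_sadd[simp]: "A' \<in> obj X \<Longrightarrow> A \<in> obj X \<Longrightarrow> B \<in> obj X \<Longrightarrow> h \<in> hom X A' A \<Longrightarrow>
  pre_dseq X A B U \<Longrightarrow> pre_dseq X A B V \<Longrightarrow>
  act X A' A B h (sadd X A B U V) = sadd X A' B (act X A' A B h U) (act X A' A B h V)"
  by (rule ext) (simp add: act_def sadd_def pre_dseqD[of A B U] pre_dseqD[of A B V])
lemma act_szro[simp]: "A' \<in> obj X \<Longrightarrow> A \<in> obj X \<Longrightarrow> B \<in> obj X \<Longrightarrow> h \<in> hom X A' A \<Longrightarrow>
  act X A' A B h (szro X A B) = szro X A' B"
  by (rule ext) (simp add: act_def szro_def)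
lemma act_post[simp]: "A' \<in> obj X \<Longrightarrow> A \<in> obj X \<Longrightarrow> B \<in> obj X \<Longrightarrow> B' \<in> obj X \<Longrightarrow> h \<in> hom X A' A \<Longrightarrow>
  pre_dseq X A B U \<Longrightarrow> k \<in> hom X B B' \<Longrightarrow>
  act X A' A B' h (post X A B B' U k) = post X A' B B' (act X A' A B h U) k"
  by (rule ext) (simp add: act_def post_def pre_dseqD[of A B U])
lemma post_post[simp]: "A \<in> obj X \<Longrightarrow> B \<in> obj X \<Longrightarrow> B' \<in> obj X \<Longrightarrow> B'' \<in> obj X \<Longrightarrow>
  pre_dseq X A B U \<Longrightarrow> h \<in> hom X B B' \<Longrightarrow> k \<in> hom X B' B'' \<Longrightarrow>
  post X A B' B'' (post X A B B' U h) k = post X A B B'' U (cmp X B B' B'' h k)"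
  by (rule ext) (simp add: post_def pre_dseqD[of A B U])
lemma post_id[simp]: "A \<in> obj X \<Longrightarrow> B \<in> obj X \<Longrightarrow> pre_dseq X A B U \<Longrightarrow> post X A B B U (idm X B) = U"
  by (rule ext) (simp add: post_def pre_dseqD[of A B U])
lemma post_pair[simp]: "A \<in> obj X \<Longrightarrow> C \<in> obj X \<Longrightarrow> B1 \<in> obj X \<Longrightarrow> B2 \<in> obj X \<Longrightarrow>
  pre_dseq X A C U \<Longrightarrow> a \<in> hom X C B1 \<Longrightarrow> b \<in> hom X C B2 \<Longrightarrow>
  post X A C (prd X B1 B2) U (pair X C B1 B2 a b) = spair X A B1 B2 (post X A C B1 U a) (post X A C B2 U b)"
  by (rule ext) (simp add: post_def spair_def pre_dseqD[of A C U])
lemma post_spair_pr0[simp]: "A \<in> obj X \<Longrightarrow> B1 \<in> obj X \<Longrightarrow> B2 \<in> obj X \<Longrightarrow>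
  pre_dseq X A B1 U \<Longrightarrow> pre_dseq X A B2 V \<Longrightarrow>
  post X A (prd X B1 B2) B1 (spair X A B1 B2 U V) (pr0 X B1 B2) = U"
  by (rule ext) (simp add: post_def spair_def pre_dseqD[of A B1 U] pre_dseqD[of A B2 V])
lemma post_spair_pr1[simp]: "A \<in> obj X \<Longrightarrow> B1 \<in> obj X \<Longrightarrow> B2 \<in> obj X \<Longrightarrow>
  pre_dseq X A B1 U \<Longrightarrow> pre_dseq X A B2 V \<Longrightarrow>
  post X A (prd X B1 B2) B2 (spair X A B1 B2 U V) (pr1 X B1 B2) = V"
  by (rule ext) (simp add: post_def spair_def pre_dseqD[of A B1 U] pre_dseqD[of A B2 V])
lemma post_spair_pr0'[simp]: "A \<in> obj X \<Longrightarrow> B1 \<in> obj X \<Longrightarrow> B2 \<in> obj X \<Longrightarrow> D \<in> obj X \<Longrightarrow>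
  pre_dseq X A B1 U \<Longrightarrow> pre_dseq X A B2 V \<Longrightarrow> k \<in> hom X B1 D \<Longrightarrow>
  post X A (prd X B1 B2) D (spair X A B1 B2 U V) (cmp X (prd X B1 B2) B1 D (pr0 X B1 B2) k) = post X A B1 D U k"
  by (rule ext) (simp add: post_def spair_def pre_dseqD[of A B1 U] pre_dseqD[of A B2 V])
lemma post_spair_pr1'[simp]: "A \<in> obj X \<Longrightarrow> B1 \<in> obj X \<Longrightarrow> B2 \<in> obj X \<Longrightarrow> D \<in> obj X \<Longrightarrow>
  pre_dseq X A B1 U \<Longrightarrow> pre_dseq X A B2 V \<Longrightarrow> k \<in> hom X B2 D \<Longrightarrow>
  post X A (prd X B1 B2) D (spair X A B1 B2 U V) (cmp X (prd X B1 B2) B2 D (pr1 X B1 B2) k) = post X A B2 D V k"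
  by (rule ext) (simp add: post_def spair_def pre_dseqD[of A B1 U] pre_dseqD[of A B2 V])
lemma post_add[simp]: "A \<in> obj X \<Longrightarrow> B \<in> obj X \<Longrightarrow> B' \<in> obj X \<Longrightarrow>
  pre_dseq X A B U \<Longrightarrow> a \<in> hom X B B' \<Longrightarrow> b \<in> hom X B B' \<Longrightarrow>
  post X A B B' U (add X B B' a b) = sadd X A B' (post X A B B' U a) (post X A B B' U b)"
  by (rule ext) (simp add: post_def sadd_def pre_dseqD[of A B U])
lemma post_zro[simp]: "A \<in> obj X \<Longrightarrow> B \<in> obj X \<Longrightarrow> B' \<in> obj X \<Longrightarrow>
  pre_dseq X A B U \<Longrightarrow> post X A B B' U (zro X B B') = szro X A B'"
  by (rule ext) (simp add: post_def szro_def pre_dseqD[of A B U])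
lemma post_sadd: "A \<in> obj X \<Longrightarrow> B \<in> obj X \<Longrightarrow> B' \<in> obj X \<Longrightarrow> addm B B' h \<Longrightarrow>
  pre_dseq X A B U \<Longrightarrow> pre_dseq X A B V \<Longrightarrow>
  post X A B B' (sadd X A B U V) h = sadd X A B' (post X A B B' U h) (post X A B B' V h)"
  by (rule ext) (simp add: post_def sadd_def pre_dseqD[of A B U] pre_dseqD[of A B V] addm_add)
lemma post_szro: "A \<in> obj X \<Longrightarrow> B \<in> obj X \<Longrightarrow> B' \<in> obj X \<Longrightarrow> addm B B' h \<Longrightarrow>
  post X A B B' (szro X A B) h = szro X A B'"
  by (rule ext) (simp add: post_def szro_def addm_zro)
lemma spair_szro[simp]: "A \<in> obj X \<Longrightarrow> B1 \<in> obj X \<Longrightarrow> B2 \<in> obj X \<Longrightarrow>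
  spair X A B1 B2 (szro X A B1) (szro X A B2) = szro X A (prd X B1 B2)"
  by (rule ext) (simp add: spair_def szro_def)
lemma sadd_spair[simp]: "A \<in> obj X \<Longrightarrow> B1 \<in> obj X \<Longrightarrow> B2 \<in> obj X \<Longrightarrow>
  pre_dseq X A B1 U \<Longrightarrow> pre_dseq X A B2 V \<Longrightarrow> pre_dseq X A B1 U' \<Longrightarrow> pre_dseq X A B2 V' \<Longrightarrow>
  sadd X A (prd X B1 B2) (spair X A B1 B2 U V) (spair X A B1 B2 U' V') = spair X A B1 B2 (sadd X A B1 U U') (sadd X A B2 V V')"
  by (rule ext) (simp add: spair_def sadd_def pre_dseqD[of A B1 U] pre_dseqD[of A B2 V] pre_dseqD[of A B1 U'] pre_dseqD[of A B2 V'])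
lemma spair_eq_iff[simp]: "A \<in> obj X \<Longrightarrow> B1 \<in> obj X \<Longrightarrow> B2 \<in> obj X \<Longrightarrow>
  pre_dseq X A B1 U \<Longrightarrow> pre_dseq X A B2 V \<Longrightarrow> pre_dseq X A B1 U' \<Longrightarrow> pre_dseq X A B2 V' \<Longrightarrow>
  spair X A B1 B2 U V = spair X A B1 B2 U' V' \<longleftrightarrow> U = U' \<and> V = V'"
  apply (simp add: spair_def fun_eq_iff pre_dseqD[of A B1 U] pre_dseqD[of A B2 V] pre_dseqD[of A B1 U'] pre_dseqD[of A B2 V'])
  by blast

lemma Dk_act[simp]: "A' \<in> obj X \<Longrightarrow> A \<in> obj X \<Longrightarrow> B \<in> obj X \<Longrightarrow> h \<in> hom X A' A \<Longrightarrow>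
  Dk k (act X A' A B h F) = act X (Pn X k A') (Pn X k A) B (Pnm X k A' A h) (Dk k F)"
  by (rule ext) (simp add: act_def Dk_def)
lemma Dk_spair[simp]: "Dk k (spair X C A B U V) = spair X (Pn X k C) A B (Dk k U) (Dk k V)"
  by (rule ext) (simp add: spair_def Dk_def)
lemma Dk_sadd[simp]: "Dk k (sadd X A B U V) = sadd X (Pn X k A) B (Dk k U) (Dk k V)"
  by (rule ext) (simp add: sadd_def Dk_def)
lemma Dk_szro[simp]: "Dk k (szro X A B) = szro X (Pn X k A) B"
  by (rule ext) (simp add: szro_def Dk_def)
lemma Dk_post[simp]: "Dk k (post X A B B' U h) = post X (Pn X k A) B B' (Dk k U) h"
  by (rule ext) (simp add: post_def Dk_def)
lemma Dk_dcomp: "Dk k (dcomp X A B C F G) = dcomp X (Pn X k A) (Pn X k B) C (Tn X k A B F) (Dk k G)"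
  by (rule ext) (simp add: dcomp_def Dk_def)

lemma Tseq_spair: "A \<in> obj X \<Longrightarrow> B \<in> obj X \<Longrightarrow>
  Tseq X A B F = spair X (prd X A A) B B (act X (prd X A A) A B (pr0 X A A) F) (Dk 1 F)"
  by (rule ext) (simp add: Tseq_def spair_def act_def Dk_def)


lemma PM_pr0[simp]: "A \<in> obj X \<Longrightarrow> B \<in> obj X \<Longrightarrow> h \<in> hom X A B \<Longrightarrow>
  cmp X (prd X A A) (prd X B B) B (PM X A B h) (pr0 X B B) = cmp X (prd X A A) A B (pr0 X A A) h"
  by (simp add: PM_def tms_def)
lemma PM_pr1[simp]: "A \<in> obj X \<Longrightarrow> B \<in> obj X \<Longrightarrow> h \<in> hom X A B \<Longrightarrow>
  cmp X (prd X A A) (prd X B B) B (PM X A B h) (pr1 X B B) = cmp X (prd X A A) A B (pr1 X A A) h"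
  by (simp add: PM_def tms_def)
lemma PM_pr0'[simp]: "A \<in> obj X \<Longrightarrow> B \<in> obj X \<Longrightarrow> D \<in> obj X \<Longrightarrow> h \<in> hom X A B \<Longrightarrow> k \<in> hom X B D \<Longrightarrow>
  cmp X (prd X A A) (prd X B B) D (PM X A B h) (cmp X (prd X B B) B D (pr0 X B B) k) = cmp X (prd X A A) A D (pr0 X A A) (cmp X A B D h k)"
  by (simp add: PM_def tms_def)
lemma PM_pr1'[simp]: "A \<in> obj X \<Longrightarrow> B \<in> obj X \<Longrightarrow> D \<in> obj X \<Longrightarrow> h \<in> hom X A B \<Longrightarrow> k \<in> hom X B D \<Longrightarrow>
  cmp X (prd X A A) (prd X B B) D (PM X A B h) (cmp X (prd X B B) B D (pr1 X B B) k) = cmp X (prd X A A) A D (pr1 X A A) (cmp X A B D h k)"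
  by (simp add: PM_def tms_def)

lemma Tseq_act[simp]: "A' \<in> obj X \<Longrightarrow> A \<in> obj X \<Longrightarrow> B \<in> obj X \<Longrightarrow> h \<in> hom X A' A \<Longrightarrow> pre_dseq X A B F \<Longrightarrow>
  Tseq X A' B (act X A' A B h F) = act X (prd X A' A') (prd X A A) (prd X B B) (PM X A' A h) (Tseq X A B F)"
  by (simp add: Tseq_spair act_act)
lemma Tn_act: "A' \<in> obj X \<Longrightarrow> A \<in> obj X \<Longrightarrow> B \<in> obj X \<Longrightarrow> h \<in> hom X A' A \<Longrightarrow> pre_dseq X A B F \<Longrightarrow>
  Tn X n A' B (act X A' A B h F) = act X (Pn X n A') (Pn X n A) (Pn X n B) (Pnm X n A' A h) (Tn X n A B F)"
  by (induct n) simp_all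
lemma act_dcomp: "A' \<in> obj X \<Longrightarrow> A \<in> obj X \<Longrightarrow> B \<in> obj X \<Longrightarrow> C \<in> obj X \<Longrightarrow> h \<in> hom X A' A \<Longrightarrow>
  pre_dseq X A B F \<Longrightarrow> pre_dseq X B C G \<Longrightarrow>
  act X A' A C h (dcomp X A B C F G) = dcomp X A' B C (act X A' A B h F) G"
  by (rule ext) (simp add: dcomp_def Tn_act act_def[of X "Pn X _ A'"] pre_dseqD[of B C G],
      simp add: act_def pre_dseqD[of B C G])
lemma Tseq_post[simp]: "A \<in> obj X \<Longrightarrow> B \<in> obj X \<Longrightarrow> B' \<in> obj X \<Longrightarrow> h \<in> hom X B B' \<Longrightarrow> pre_dseq X A B F \<Longrightarrow>
  Tseq X A B' (post X A B B' F h) = post X (prd X A A) (prd X B B) (prd X B' B') (Tseq X A B F) (PM X B B' h)"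
  by (simp add: Tseq_spair PM_def tms_def)
lemma Tn_post: "A \<in> obj X \<Longrightarrow> B \<in> obj X \<Longrightarrow> B' \<in> obj X \<Longrightarrow> h \<in> hom X B B' \<Longrightarrow> pre_dseq X A B F \<Longrightarrow>
  Tn X n A B' (post X A B B' F h) = post X (Pn X n A) (Pn X n B) (Pn X n B') (Tn X n A B F) (Pnm X n B B' h)"
  by (induct n) simp_all
lemma dcomp_post: "A \<in> obj X \<Longrightarrow> B \<in> obj X \<Longrightarrow> B' \<in> obj X \<Longrightarrow> C \<in> obj X \<Longrightarrow> h \<in> hom X B B' \<Longrightarrow>
  pre_dseq X A B F \<Longrightarrow> pre_dseq X B' C G \<Longrightarrow>
  dcomp X A B' C (post X A B B' F h) G = dcomp X A B C F (act X B B' C h G)"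
  by (rule ext) (simp add: dcomp_def Tn_post, simp add: post_def act_def pre_dseqD[of B' C G])
lemma dcomp_sadd[simp]: "A \<in> obj X \<Longrightarrow> B \<in> obj X \<Longrightarrow> C \<in> obj X \<Longrightarrow>
  pre_dseq X A B F \<Longrightarrow> pre_dseq X B C G \<Longrightarrow> pre_dseq X B C H \<Longrightarrow>
  dcomp X A B C F (sadd X B C G H) = sadd X A C (dcomp X A B C F G) (dcomp X A B C F H)"
  by (rule ext) (simp add: dcomp_def sadd_def pre_dseqD[of B C G] pre_dseqD[of B C H])
lemma dcomp_szro[simp]: "A \<in> obj X \<Longrightarrow> B \<in> obj X \<Longrightarrow> C \<in> obj X \<Longrightarrow>
  pre_dseq X A B F \<Longrightarrow> dcomp X A B C F (szro X B C) = szro X A C"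
  by (rule ext) (simp add: dcomp_def szro_def)
lemma dcomp_spair[simp]: "A \<in> obj X \<Longrightarrow> B \<in> obj X \<Longrightarrow> C1 \<in> obj X \<Longrightarrow> C2 \<in> obj X \<Longrightarrow>
  pre_dseq X A B F \<Longrightarrow> pre_dseq X B C1 G \<Longrightarrow> pre_dseq X B C2 H \<Longrightarrow>
  dcomp X A B (prd X C1 C2) F (spair X B C1 C2 G H) = spair X A C1 C2 (dcomp X A B C1 F G) (dcomp X A B C2 F H)"
  by (rule ext) (simp add: dcomp_def spair_def pre_dseqD[of B C1 G] pre_dseqD[of B C2 H])

lemma Tn_pr0: "A \<in> obj X \<Longrightarrow> B \<in> obj X \<Longrightarrow> pre_dseq X A B F \<Longrightarrow>
  post X (Pn X (Suc k) A) (Pn X (Suc k) B) (Pn X k B) (Tn X (Suc k) A B F) (Pnm X k (prd X B B) B (pr0 X B B))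
  = act X (Pn X (Suc k) A) (Pn X k A) (Pn X k B) (Pnm X k (prd X A A) A (pr0 X A A)) (Tn X k A B F)"
proof (induct k)
  case 0
  then show ?case by (simp add: Tseq_spair)
next
  case (Suc k)
  let ?pA = "Pnm X k (prd X A A) A (pr0 X A A)" and ?pB = "Pnm X k (prd X B B) B (pr0 X B B)"
  have "post X (Pn X (Suc (Suc k)) A) (Pn X (Suc (Suc k)) B) (Pn X (Suc k) B) (Tn X (Suc (Suc k)) A B F) (Pnm X (Suc k) (prd X B B) B (pr0 X B B))
    = Tseq X (Pn X (Suc k) A) (Pn X k B) (post X (Pn X (Suc k) A) (Pn X (Suc k) B) (Pn X k B) (Tn X (Suc k) A B F) ?pB)"
    using Suc.prems by (subst Tseq_post) simp_all
  also have "\<dots> = Tseq X (Pn X (Suc k) A) (Pn X k B) (act X (Pn X (Suc k) A) (Pn X k A) (Pn X k B) ?pA (Tn X k A B F))"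
    using Suc by simp
  also have "\<dots> = act X (Pn X (Suc (Suc k)) A) (Pn X (Suc k) A) (Pn X (Suc k) B) (Pnm X (Suc k) (prd X A A) A (pr0 X A A)) (Tn X (Suc k) A B F)"
    using Suc.prems by (subst Tseq_act) simp_all
  finally show ?case .
qed

lemma Tseq_dcomp: "A \<in> obj X \<Longrightarrow> B \<in> obj X \<Longrightarrow> C \<in> obj X \<Longrightarrow> pre_dseq X A B F \<Longrightarrow> pre_dseq X B C G \<Longrightarrow>
  Tseq X A C (dcomp X A B C F G) = dcomp X (prd X A A) (prd X B B) (prd X C C) (Tseq X A B F) (Tseq X B C G)"
proof (rule ext)
  fix n
  assume A: "A \<in> obj X" and B: "B \<in> obj X" and C: "C \<in> obj X" and F: "pre_dseq X A B F" and G: "pre_dseq X B C G"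
  have q: "cmp X (Pn X (Suc n) A) (Pn X (Suc n) B) (Pn X n B) (Tn X (Suc n) A B F 0) (Pnm X n (prd X B B) B (pr0 X B B))
     = cmp X (Pn X (Suc n) A) (Pn X n A) (Pn X n B) (Pnm X n (prd X A A) A (pr0 X A A)) (Tn X n A B F 0)"
    using fun_cong[OF Tn_pr0[OF A B F, of n], of 0] A B F by (simp add: post_def act_def)
  have q': "cmp X (Pn X (Suc n) A) (Pn X (Suc n) B) C (Tn X (Suc n) A B F 0) (cmp X (Pn X (Suc n) B) (Pn X n B) C (Pnm X n (prd X B B) B (pr0 X B B)) (G n))
     = cmp X (Pn X (Suc n) A) (Pn X n A) C (Pnm X n (prd X A A) A (pr0 X A A)) (cmp X (Pn X n A) (Pn X n B) C (Tn X n A B F 0) (G n))"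
    using q A B C F G
    by (simp add: pre_dseqD[of B C G] flip: assoc)
  show "Tseq X A C (dcomp X A B C F G) n = dcomp X (prd X A A) (prd X B B) (prd X C C) (Tseq X A B F) (Tseq X B C G) n"
    using A B C F G q'
    by (simp add: Tseq_def[of X A C] Tseq_def[of X B C] dcomp_def pre_dseqD[of B C G] del: Tn.simps)
qed

lemma Tn_dcomp: "A \<in> obj X \<Longrightarrow> B \<in> obj X \<Longrightarrow> C \<in> obj X \<Longrightarrow> pre_dseq X A B F \<Longrightarrow> pre_dseq X B C G \<Longrightarrow>
  Tn X n A C (dcomp X A B C F G) = dcomp X (Pn X n A) (Pn X n B) (Pn X n C) (Tn X n A B F) (Tn X n B C G)"
  by (induct n) (simp_all add: Tseq_dcomp)

lemma dcomp_assoc: "A \<in> obj X \<Longrightarrow> B \<in> obj X \<Longrightarrow> C \<in> obj X \<Longrightarrow> D \<in> obj X \<Longrightarrow>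
  pre_dseq X A B F \<Longrightarrow> pre_dseq X B C G \<Longrightarrow> pre_dseq X C D H \<Longrightarrow>
  dcomp X A C D (dcomp X A B C F G) H = dcomp X A B D F (dcomp X B C D G H)"
  by (rule ext) (simp add: dcomp_def[of X A C D] dcomp_def[of X A B D] Tn_dcomp pre_dseqD[of C D H],
     simp add: dcomp_def pre_dseqD[of C D H])


lemma Pnm_iseq: "A' \<in> obj X \<Longrightarrow> A \<in> obj X \<Longrightarrow> h \<in> hom X A' A \<Longrightarrow>
  cmp X (Pn X n A') (Pn X n A) A (Pnm X n A' A h) (iseq X A n) = cmp X (Pn X n A') A' A (iseq X A' n) h"
  by (induct n) simp_all
lemma act_iseq[simp]: "A' \<in> obj X \<Longrightarrow> A \<in> obj X \<Longrightarrow> h \<in> hom X A' A \<Longrightarrow>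
  act X A' A A h (iseq X A) = post X A' A' A (iseq X A') h"
  by (rule ext) (simp add: act_def post_def Pnm_iseq)
lemma iseq_Suc': "A \<in> obj X \<Longrightarrow> iseq X A (Suc n) = cmp X (Pn X n (prd X A A)) (prd X A A) A (iseq X (prd X A A) n) (pr1 X A A)"
proof (induct n)
  case 0 then show ?case by simp
next
  case (Suc n)
  have "iseq X A (Suc (Suc n)) = cmp X (Pn X (Suc (Suc n)) A) (Pn X (Suc n) A) A (pr1 X (Pn X (Suc n) A) (Pn X (Suc n) A)) (iseq X A (Suc n))"
    by simp
  also have "\<dots> = cmp X (Pn X (Suc n) (prd X A A)) (prd X A A) A (iseq X (prd X A A) (Suc n)) (pr1 X A A)"
    using Suc by (simp del: iseq.simps(2) add: iseq.simps(2)[of X "prd X A A"])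
  finally show ?case .
qed
lemma Dk1_iseq: "A \<in> obj X \<Longrightarrow> Dk (Suc 0) (iseq X A) = post X (prd X A A) (prd X A A) A (iseq X (prd X A A)) (pr1 X A A)"
  by (rule ext) (simp add: Dk_def post_def iseq_Suc' del: iseq.simps)
lemma Dk_iseq: "A \<in> obj X \<Longrightarrow> Dk k (iseq X A) = post X (Pn X k A) (Pn X k A) A (iseq X (Pn X k A)) (iseq X A k)"
proof (induct k)
  case 0 then show ?case by simp
next
  case (Suc k)
  have "Dk (Suc k) (iseq X A) = Dk 1 (Dk k (iseq X A))" by simp
  also have "\<dots> = post X (Pn X (Suc k) A) (Pn X (Suc k) A) A (iseq X (Pn X (Suc k) A)) (iseq X A (Suc k))"
    using Suc by (simp add: Dk1_iseq del: iseq.simps(2)) simp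
  finally show ?case .
qed
lemma Tseq_iseq[simp]: "A \<in> obj X \<Longrightarrow> Tseq X A A (iseq X A) = iseq X (prd X A A)"
proof -
  assume A: "A \<in> obj X"
  have "Tseq X A A (iseq X A) = spair X (prd X A A) A A (post X (prd X A A) (prd X A A) A (iseq X (prd X A A)) (pr0 X A A))
      (post X (prd X A A) (prd X A A) A (iseq X (prd X A A)) (pr1 X A A))"
    using A by (simp add: Tseq_spair Dk1_iseq)
  also have "\<dots> = post X (prd X A A) (prd X A A) (prd X A A) (iseq X (prd X A A)) (pair X (prd X A A) A A (pr0 X A A) (pr1 X A A))"
    using A by (subst post_pair) simp_all
  also have "\<dots> = iseq X (prd X A A)" using A by simp
  finally show ?thesis .
qed
lemma Tn_iseq[simp]: "A \<in> obj X \<Longrightarrow> Tn X n A A (iseq X A) = iseq X (Pn X n A)"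
  by (induct n) simp_all
lemma dcomp_id_l: "A \<in> obj X \<Longrightarrow> B \<in> obj X \<Longrightarrow> pre_dseq X A B F \<Longrightarrow> dcomp X A A B (iseq X A) F = F"
  by (rule ext) (simp add: dcomp_def pre_dseqD[of A B F])
lemma post_Tn_iseq: "A \<in> obj X \<Longrightarrow> B \<in> obj X \<Longrightarrow> pre_dseq X A B F \<Longrightarrow>
  post X (Pn X k A) (Pn X k B) B (Tn X k A B F) (iseq X B k) = Dk k F"
proof (induct k)
  case 0 then show ?case by simp
next
  case (Suc k)
  have "post X (Pn X (Suc k) A) (Pn X (Suc k) B) B (Tn X (Suc k) A B F) (iseq X B (Suc k))
     = post X (Pn X (Suc k) A) (Pn X k B) B (post X (Pn X (Suc k) A) (Pn X (Suc k) B) (Pn X k B) (Tn X (Suc k) A B F) (pr1 X (Pn X k B) (Pn X k B))) (iseq X B k)"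
    using Suc.prems by simp
  also have "\<dots> = post X (Pn X (Suc k) A) (Pn X k B) B (Dk 1 (Tn X k A B F)) (iseq X B k)"
    using Suc.prems by (simp add: Tseq_spair)
  also have "\<dots> = Dk 1 (post X (Pn X k A) (Pn X k B) B (Tn X k A B F) (iseq X B k))"
    by simp
  also have "\<dots> = Dk 1 (Dk k F)" using Suc by simp
  finally show ?case by simp
qed
lemma dcomp_id_r: "A \<in> obj X \<Longrightarrow> B \<in> obj X \<Longrightarrow> pre_dseq X A B F \<Longrightarrow> dcomp X A B B F (iseq X B) = F"
  by (rule ext) (simp add: dcomp_def fun_cong[OF post_Tn_iseq, of A B F _ 0, simplified post_def Dk_def, simplified])


lemma i10_hom[simp]: "C \<in> obj X \<Longrightarrow> C' = C \<Longrightarrow> P = prd X C C \<Longrightarrow> i10 X C \<in> hom X C' P"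
  by (simp add: i10_def)
lemma i01_hom[simp]: "C \<in> obj X \<Longrightarrow> C' = C \<Longrightarrow> P = prd X C C \<Longrightarrow> i01 X C \<in> hom X C' P"
  by (simp add: i01_def)
lemma ssum_hom[simp]: "C \<in> obj X \<Longrightarrow> C' = C \<Longrightarrow> P = prd X C C \<Longrightarrow> ssum X C \<in> hom X P C'"
  by (simp add: ssum_def)
lemma s1_hom[simp]: "C \<in> obj X \<Longrightarrow> P = prd X C C \<Longrightarrow> Q = prd X C (prd X C C) \<Longrightarrow> k \<in> hom X (prd X C C) C \<Longrightarrow> s1 X C k \<in> hom X Q P"
  by (simp add: s1_def)
lemma ellm_hom[simp]: "C \<in> obj X \<Longrightarrow> P = prd X C C \<Longrightarrow> Q = prd X (prd X C C) (prd X C C) \<Longrightarrow> ellm X C \<in> hom X P Q"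
  by (simp add: ellm_def)
lemma ccm_hom[simp]: "C \<in> obj X \<Longrightarrow> P = prd X (prd X C C) (prd X C C) \<Longrightarrow> Q = prd X (prd X C C) (prd X C C) \<Longrightarrow> ccm X C \<in> hom X P Q"
  by (simp add: ccm_def)

lemma x_i10_PM: "A' \<in> obj X \<Longrightarrow> A \<in> obj X \<Longrightarrow> addm A' A h \<Longrightarrow>
  cmp X A' (prd X A' A') (prd X A A) (i10 X A') (PM X A' A h) = cmp X A' A (prd X A A) h (i10 X A)"
  using addm_hom[of A' A h] by (simp add: i10_def PM_def tms_def addm_zro)
lemma x_s1_PM: "A' \<in> obj X \<Longrightarrow> A \<in> obj X \<Longrightarrow> addm A' A h \<Longrightarrow>
  cmp X (prd X A' (prd X A' A')) (prd X A' A') (prd X A A) (s1 X A' (ssum X A')) (PM X A' A h)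
  = cmp X (prd X A' (prd X A' A')) (prd X A (prd X A A)) (prd X A A) (tms X A' (prd X A' A') A (prd X A A) h (PM X A' A h)) (s1 X A (ssum X A))"
  using addm_hom[of A' A h] by (simp add: s1_def ssum_def PM_def tms_def addm_add)
lemma x_s1p0_PM: "A' \<in> obj X \<Longrightarrow> A \<in> obj X \<Longrightarrow> h \<in> hom X A' A \<Longrightarrow>
  cmp X (prd X A' (prd X A' A')) (prd X A' A') (prd X A A) (s1 X A' (pr0 X A' A')) (PM X A' A h)
  = cmp X (prd X A' (prd X A' A')) (prd X A (prd X A A)) (prd X A A) (tms X A' (prd X A' A') A (prd X A A) h (PM X A' A h)) (s1 X A (pr0 X A A))"
  by (simp add: s1_def PM_def tms_def)
lemma x_s1p1_PM: "A' \<in> obj X \<Longrightarrow> A \<in> obj X \<Longrightarrow> h \<in> hom X A' A \<Longrightarrow>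
  cmp X (prd X A' (prd X A' A')) (prd X A' A') (prd X A A) (s1 X A' (pr1 X A' A')) (PM X A' A h)
  = cmp X (prd X A' (prd X A' A')) (prd X A (prd X A A)) (prd X A A) (tms X A' (prd X A' A') A (prd X A A) h (PM X A' A h)) (s1 X A (pr1 X A A))"
  by (simp add: s1_def PM_def tms_def)
lemma x_ell_PM: "A' \<in> obj X \<Longrightarrow> A \<in> obj X \<Longrightarrow> addm A' A h \<Longrightarrow>
  cmp X (prd X A' A') (prd X (prd X A' A') (prd X A' A')) (prd X (prd X A A) (prd X A A)) (ellm X A') (PM X (prd X A' A') (prd X A A) (PM X A' A h))
  = cmp X (prd X A' A') (prd X A A) (prd X (prd X A A) (prd X A A)) (PM X A' A h) (ellm X A)"
  using addm_hom[of A' A h] by (simp add: ellm_def i10_def i01_def PM_def tms_def addm_zro)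
lemma x_cc_PM: "A' \<in> obj X \<Longrightarrow> A \<in> obj X \<Longrightarrow> h \<in> hom X A' A \<Longrightarrow>
  cmp X (prd X (prd X A' A') (prd X A' A')) (prd X (prd X A' A') (prd X A' A')) (prd X (prd X A A) (prd X A A)) (ccm X A') (PM X (prd X A' A') (prd X A A) (PM X A' A h))
  = cmp X (prd X (prd X A' A') (prd X A' A')) (prd X (prd X A A) (prd X A A)) (prd X (prd X A A) (prd X A A)) (PM X (prd X A' A') (prd X A A) (PM X A' A h)) (ccm X A)"
  by (simp add: ccm_def PM_def tms_def)


lemma Lc_g1: "Lc X C B U \<Longrightarrow> C \<in> obj X \<Longrightarrow> B \<in> obj X \<Longrightarrow> Z \<in> obj X \<Longrightarrow> pre_dseq X C B U \<Longrightarrow> k \<in> hom X Z C \<Longrightarrow>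
  act X Z (prd X C C) B (cmp X Z C (prd X C C) k (i10 X C)) (Dk (Suc 0) U) = szro X Z B"
proof -
  assume L: "Lc X C B U" and o: "C \<in> obj X" "B \<in> obj X" "Z \<in> obj X" and U: "pre_dseq X C B U" and k: "k \<in> hom X Z C"
  have "act X Z (prd X C C) B (cmp X Z C (prd X C C) k (i10 X C)) (Dk (Suc 0) U)
     = act X Z C B k (act X C (prd X C C) B (i10 X C) (Dk (Suc 0) U))"
    using o U k by (subst act_act) simp_all
  also have "\<dots> = szro X Z B" using L o k by (simp add: Lc_def)
  finally show ?thesis .
qed
lemma Lc_g2: "Lc X C B U \<Longrightarrow> C \<in> obj X \<Longrightarrow> B \<in> obj X \<Longrightarrow> Z \<in> obj X \<Longrightarrow> pre_dseq X C B U \<Longrightarrow> k \<in> hom X Z (prd X C (prd X C C)) \<Longrightarrow>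
  act X Z (prd X C C) B (cmp X Z (prd X C (prd X C C)) (prd X C C) k (s1 X C (ssum X C))) (Dk (Suc 0) U)
  = sadd X Z B (act X Z (prd X C C) B (cmp X Z (prd X C (prd X C C)) (prd X C C) k (s1 X C (pr0 X C C))) (Dk (Suc 0) U))
               (act X Z (prd X C C) B (cmp X Z (prd X C (prd X C C)) (prd X C C) k (s1 X C (pr1 X C C))) (Dk (Suc 0) U))"
proof -
  assume L: "Lc X C B U" and o: "C \<in> obj X" "B \<in> obj X" "Z \<in> obj X" and U: "pre_dseq X C B U" and k: "k \<in> hom X Z (prd X C (prd X C C))"
  have e: "\<And>m. m \<in> hom X (prd X C C) C \<Longrightarrow> act X Z (prd X C C) B (cmp X Z (prd X C (prd X C C)) (prd X C C) k (s1 X C m)) (Dk (Suc 0) U)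
     = act X Z (prd X C (prd X C C)) B k (act X (prd X C (prd X C C)) (prd X C C) B (s1 X C m) (Dk (Suc 0) U))"
    using o U k by (subst act_act) simp_all
  show ?thesis using L o k U by (simp add: e Lc_def)
qed
lemma Lc_g3: "Lc X C B U \<Longrightarrow> C \<in> obj X \<Longrightarrow> B \<in> obj X \<Longrightarrow> Z \<in> obj X \<Longrightarrow> pre_dseq X C B U \<Longrightarrow> k \<in> hom X Z (prd X C C) \<Longrightarrow>
  act X Z (prd X (prd X C C) (prd X C C)) B (cmp X Z (prd X C C) (prd X (prd X C C) (prd X C C)) k (ellm X C)) (Dk (Suc (Suc 0)) U)
  = act X Z (prd X C C) B k (Dk (Suc 0) U)"
proof -
  assume L: "Lc X C B U" and o: "C \<in> obj X" "B \<in> obj X" "Z \<in> obj X" and U: "pre_dseq X C B U" and k: "k \<in> hom X Z (prd X C C)"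
  have "act X Z (prd X (prd X C C) (prd X C C)) B (cmp X Z (prd X C C) (prd X (prd X C C) (prd X C C)) k (ellm X C)) (Dk (Suc (Suc 0)) U)
     = act X Z (prd X C C) B k (act X (prd X C C) (prd X (prd X C C) (prd X C C)) B (ellm X C) (Dk (Suc (Suc 0)) U))"
    using o U k by (subst act_act) simp_all
  then show ?thesis using L by (simp add: Lc_def)
qed
lemma Lc_g4: "Lc X C B U \<Longrightarrow> C \<in> obj X \<Longrightarrow> B \<in> obj X \<Longrightarrow> Z \<in> obj X \<Longrightarrow> pre_dseq X C B U \<Longrightarrow> k \<in> hom X Z (prd X (prd X C C) (prd X C C)) \<Longrightarrow>
  act X Z (prd X (prd X C C) (prd X C C)) B (cmp X Z (prd X (prd X C C) (prd X C C)) (prd X (prd X C C) (prd X C C)) k (ccm X C)) (Dk (Suc (Suc 0)) U)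
  = act X Z (prd X (prd X C C) (prd X C C)) B k (Dk (Suc (Suc 0)) U)"
proof -
  assume L: "Lc X C B U" and o: "C \<in> obj X" "B \<in> obj X" "Z \<in> obj X" and U: "pre_dseq X C B U" and k: "k \<in> hom X Z (prd X (prd X C C) (prd X C C))"
  have "act X Z (prd X (prd X C C) (prd X C C)) B (cmp X Z (prd X (prd X C C) (prd X C C)) (prd X (prd X C C) (prd X C C)) k (ccm X C)) (Dk (Suc (Suc 0)) U)
     = act X Z (prd X (prd X C C) (prd X C C)) B k (act X (prd X (prd X C C) (prd X C C)) (prd X (prd X C C) (prd X C C)) B (ccm X C) (Dk (Suc (Suc 0)) U))"
    using o U k by (subst act_act) simp_all
  then show ?thesis using L by (simp add: Lc_def)
qed

lemma Lc_act: "A' \<in> obj X \<Longrightarrow> A \<in> obj X \<Longrightarrow> B \<in> obj X \<Longrightarrow> addm A' A h \<Longrightarrow> pre_dseq X A B U \<Longrightarrow> Lc X A B U \<Longrightarrow>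
  Lc X A' B (act X A' A B h U)"
  using addm_hom[of A' A h]
  by (simp add: Lc_def act_act x_i10_PM x_s1_PM x_s1p0_PM x_s1p1_PM x_ell_PM x_cc_PM Lc_g1 Lc_g2 Lc_g3 Lc_g4)


lemma sadd4: "A \<in> obj X \<Longrightarrow> B \<in> obj X \<Longrightarrow> pre_dseq X A B a \<Longrightarrow> pre_dseq X A B b \<Longrightarrow> pre_dseq X A B c \<Longrightarrow> pre_dseq X A B d \<Longrightarrow>
  sadd X A B (sadd X A B a b) (sadd X A B c d) = sadd X A B (sadd X A B a c) (sadd X A B b d)"
  by (rule ext) (simp add: sadd_def add4 pre_dseqD[of A B a] pre_dseqD[of A B b] pre_dseqD[of A B c] pre_dseqD[of A B d])

lemma sadd_szro_r[simp]: "A \<in> obj X \<Longrightarrow> B \<in> obj X \<Longrightarrow> pre_dseq X A B U \<Longrightarrow> sadd X A B U (szro X A B) = U"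
  by (rule ext) (simp add: sadd_def szro_def pre_dseqD[of A B U])
lemma sadd_szro_l[simp]: "A \<in> obj X \<Longrightarrow> B \<in> obj X \<Longrightarrow> pre_dseq X A B U \<Longrightarrow> sadd X A B (szro X A B) U = U"
  by (rule ext) (simp add: sadd_def szro_def pre_dseqD[of A B U])

lemma Lc_spair: "C \<in> obj X \<Longrightarrow> B1 \<in> obj X \<Longrightarrow> B2 \<in> obj X \<Longrightarrow> pre_dseq X C B1 U \<Longrightarrow> pre_dseq X C B2 V \<Longrightarrow>
  Lc X C B1 U \<Longrightarrow> Lc X C B2 V \<Longrightarrow> Lc X C (prd X B1 B2) (spair X C B1 B2 U V)"
  by (simp add: Lc_def)
lemma Lc_sadd: "C \<in> obj X \<Longrightarrow> B \<in> obj X \<Longrightarrow> pre_dseq X C B U \<Longrightarrow> pre_dseq X C B V \<Longrightarrow>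
  Lc X C B U \<Longrightarrow> Lc X C B V \<Longrightarrow> Lc X C B (sadd X C B U V)"
  by (simp add: Lc_def sadd4)
lemma Lc_szro: "C \<in> obj X \<Longrightarrow> B \<in> obj X \<Longrightarrow> Lc X C B (szro X C B)"
  by (simp add: Lc_def)
lemma Lc_post: "C \<in> obj X \<Longrightarrow> B \<in> obj X \<Longrightarrow> B' \<in> obj X \<Longrightarrow> addm B B' h \<Longrightarrow> pre_dseq X C B U \<Longrightarrow>
  Lc X C B U \<Longrightarrow> Lc X C B' (post X C B B' U h)"
  using addm_hom[of B B' h] by (simp add: Lc_def post_szro post_sadd)
lemma addm_iseq: "A \<in> obj X \<Longrightarrow> addm (Pn X n A) A (iseq X A n)"
  by (induct n) (auto intro!: addm_cmp addm_pr1 addm_idm)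
lemma Lc_iseq: "A \<in> obj X \<Longrightarrow> Lc X A A (iseq X A)"
  by (simp add: Lc_def Dk_iseq i10_def i01_def s1_def ssum_def tms_def ellm_def ccm_def)

lemma dseq_pre: "dseq X A B F \<Longrightarrow> pre_dseq X A B F" by (simp add: dseq_iff)
lemma dseq_Lc: "dseq X A B F \<Longrightarrow> Lc X (Pn X n A) B (Dk n F)" by (simp add: dseq_iff)
lemma dseq_Lc0: "dseq X A B F \<Longrightarrow> Lc X A B F" using dseq_Lc[of A B F 0] by simp

lemma dseq_iseq: "A \<in> obj X \<Longrightarrow> dseq X A A (iseq X A)"
  by (simp add: dseq_iff Dk_iseq Lc_post addm_iseq Lc_iseq del: iseq.simps)
lemma dseq_post: "A \<in> obj X \<Longrightarrow> B \<in> obj X \<Longrightarrow> B' \<in> obj X \<Longrightarrow> addm B B' h \<Longrightarrow> dseq X A B F \<Longrightarrow> dseq X A B' (post X A B B' F h)"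
  using addm_hom[of B B' h] by (simp add: dseq_iff Lc_post)
lemma dseq_spair: "C \<in> obj X \<Longrightarrow> B1 \<in> obj X \<Longrightarrow> B2 \<in> obj X \<Longrightarrow> dseq X C B1 U \<Longrightarrow> dseq X C B2 V \<Longrightarrow>
  dseq X C (prd X B1 B2) (spair X C B1 B2 U V)"
  by (simp add: dseq_iff Lc_spair)
lemma dseq_sadd: "C \<in> obj X \<Longrightarrow> B \<in> obj X \<Longrightarrow> dseq X C B U \<Longrightarrow> dseq X C B V \<Longrightarrow> dseq X C B (sadd X C B U V)"
  by (simp add: dseq_iff Lc_sadd)
lemma dseq_szro: "C \<in> obj X \<Longrightarrow> B \<in> obj X \<Longrightarrow> dseq X C B (szro X C B)"
  by (simp add: dseq_iff Lc_szro)

lemma Dk_Tseq: "A \<in> obj X \<Longrightarrow> B \<in> obj X \<Longrightarrow> pre_dseq X A B F \<Longrightarrow>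
  Dk k (Tseq X A B F) = spair X (Pn X (Suc k) A) B B (act X (Pn X (Suc k) A) (Pn X k A) B (Pnm X k (prd X A A) A (pr0 X A A)) (Dk k F)) (Dk (Suc k) F)"
  by (simp add: Tseq_spair)
lemma dseq_Tseq: "A \<in> obj X \<Longrightarrow> B \<in> obj X \<Longrightarrow> dseq X A B F \<Longrightarrow> dseq X (prd X A A) (prd X B B) (Tseq X A B F)"
proof -
  assume A: "A \<in> obj X" and B: "B \<in> obj X" and F: "dseq X A B F"
  have pF: "pre_dseq X A B F" using F by (rule dseq_pre)
  have "Lc X (Pn X n (prd X A A)) (prd X B B) (Dk n (Tseq X A B F))" for n
  proof -
    have a: "addm (Pn X (Suc n) A) (Pn X n A) (Pnm X n (prd X A A) A (pr0 X A A))"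
      using addm_Pnm[OF _ A addm_pr0[OF A A], of n] A by simp
    have "Lc X (Pn X (Suc n) A) (prd X B B) (Dk n (Tseq X A B F))"
      unfolding Dk_Tseq[OF A B pF]
      apply (rule Lc_spair)
      using A B pF apply simp_all
      apply (rule Lc_act) using A B pF a dseq_Lc[OF F, of n] apply simp_all
      using dseq_Lc[OF F, of "Suc n"] by simp
    then show ?thesis by simp
  qed
  then show ?thesis using A B pF by (simp add: dseq_iff)
qed
lemma dseq_Tn: "A \<in> obj X \<Longrightarrow> B \<in> obj X \<Longrightarrow> dseq X A B F \<Longrightarrow> dseq X (Pn X n A) (Pn X n B) (Tn X n A B F)"
proof (induct n)
  case 0 then show ?case by simp
next
  case (Suc n) then show ?case using dseq_Tseq[of "Pn X n A" "Pn X n B" "Tn X n A B F"] by simp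
qed


lemma i10_pr0[simp]: "C \<in> obj X \<Longrightarrow> cmp X C (prd X C C) C (i10 X C) (pr0 X C C) = idm X C"
  by (simp add: i10_def)
lemma i10_pr1[simp]: "C \<in> obj X \<Longrightarrow> cmp X C (prd X C C) C (i10 X C) (pr1 X C C) = zro X C C"
  by (simp add: i10_def)
lemma post_i10[simp]: "A \<in> obj X \<Longrightarrow> C \<in> obj X \<Longrightarrow> pre_dseq X A C U \<Longrightarrow>
  post X A C (prd X C C) U (i10 X C) = spair X A C C U (szro X A C)"
  by (simp add: i10_def)
lemma post_i01[simp]: "A \<in> obj X \<Longrightarrow> C \<in> obj X \<Longrightarrow> pre_dseq X A C U \<Longrightarrow>
  post X A C (prd X C C) U (i01 X C) = spair X A C C (szro X A C) U"
  by (simp add: i01_def)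
lemma s1_pr0[simp]: "C \<in> obj X \<Longrightarrow> k \<in> hom X (prd X C C) C \<Longrightarrow>
  cmp X (prd X C (prd X C C)) (prd X C C) C (s1 X C k) (pr0 X C C) = pr0 X C (prd X C C)"
  by (simp add: s1_def tms_def)
lemma post_s1[simp]: "A \<in> obj X \<Longrightarrow> C \<in> obj X \<Longrightarrow> k \<in> hom X (prd X C C) C \<Longrightarrow> pre_dseq X A C U \<Longrightarrow> pre_dseq X A (prd X C C) V \<Longrightarrow>
  post X A (prd X C (prd X C C)) (prd X C C) (spair X A C (prd X C C) U V) (s1 X C k) = spair X A C C U (post X A (prd X C C) C V k)"
  by (simp add: s1_def tms_def)
lemma post_ssum[simp]: "A \<in> obj X \<Longrightarrow> C \<in> obj X \<Longrightarrow> pre_dseq X A C U \<Longrightarrow> pre_dseq X A C V \<Longrightarrow>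
  post X A (prd X C C) C (spair X A C C U V) (ssum X C) = sadd X A C U V"
  by (simp add: ssum_def)
lemma ell_pr0[simp]: "C \<in> obj X \<Longrightarrow>
  cmp X (prd X C C) (prd X (prd X C C) (prd X C C)) (prd X C C) (ellm X C) (pr0 X (prd X C C) (prd X C C)) = cmp X (prd X C C) C (prd X C C) (pr0 X C C) (i10 X C)"
  by (simp add: ellm_def tms_def)
lemma ell_pr0'[simp]: "C \<in> obj X \<Longrightarrow> D \<in> obj X \<Longrightarrow> k \<in> hom X (prd X C C) D \<Longrightarrow>
  cmp X (prd X C C) (prd X (prd X C C) (prd X C C)) D (ellm X C) (cmp X (prd X (prd X C C) (prd X C C)) (prd X C C) D (pr0 X (prd X C C) (prd X C C)) k)
  = cmp X (prd X C C) C D (pr0 X C C) (cmp X C (prd X C C) D (i10 X C) k)"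
  by (simp add: ellm_def tms_def)
lemma ell_PMpr0[simp]: "C \<in> obj X \<Longrightarrow>
  cmp X (prd X C C) (prd X (prd X C C) (prd X C C)) (prd X C C) (ellm X C) (PM X (prd X C C) C (pr0 X C C)) = cmp X (prd X C C) C (prd X C C) (pr0 X C C) (i10 X C)"
  by (simp add: ellm_def tms_def PM_def i10_def i01_def)
lemma post_ellm[simp]: "A \<in> obj X \<Longrightarrow> C \<in> obj X \<Longrightarrow> pre_dseq X A C U \<Longrightarrow> pre_dseq X A C V \<Longrightarrow>
  post X A (prd X C C) (prd X (prd X C C) (prd X C C)) (spair X A C C U V) (ellm X C) = spair X A (prd X C C) (prd X C C) (spair X A C C U (szro X A C)) (spair X A C C (szro X A C) V)"
  by (simp add: ellm_def tms_def del: post_i10 post_i01) (simp add: i10_def i01_def)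
lemma ccm_pr0[simp]: "C \<in> obj X \<Longrightarrow>
  cmp X (prd X (prd X C C) (prd X C C)) (prd X (prd X C C) (prd X C C)) (prd X C C) (ccm X C) (pr0 X (prd X C C) (prd X C C)) = PM X (prd X C C) C (pr0 X C C)"
  by (simp add: ccm_def PM_def tms_def)
lemma ccm_pr0'[simp]: "C \<in> obj X \<Longrightarrow> D \<in> obj X \<Longrightarrow> k \<in> hom X (prd X C C) D \<Longrightarrow>
  cmp X (prd X (prd X C C) (prd X C C)) (prd X (prd X C C) (prd X C C)) D (ccm X C) (cmp X (prd X (prd X C C) (prd X C C)) (prd X C C) D (pr0 X (prd X C C) (prd X C C)) k)
  = cmp X (prd X (prd X C C) (prd X C C)) (prd X C C) D (PM X (prd X C C) C (pr0 X C C)) k"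
  by (simp flip: assoc)
lemma ccm_PMpr0[simp]: "C \<in> obj X \<Longrightarrow>
  cmp X (prd X (prd X C C) (prd X C C)) (prd X (prd X C C) (prd X C C)) (prd X C C) (ccm X C) (PM X (prd X C C) C (pr0 X C C)) = pr0 X (prd X C C) (prd X C C)"
  by (simp add: ccm_def PM_def tms_def)
lemma post_ccm[simp]: "A \<in> obj X \<Longrightarrow> C \<in> obj X \<Longrightarrow> pre_dseq X A C a \<Longrightarrow> pre_dseq X A C b \<Longrightarrow> pre_dseq X A C c \<Longrightarrow> pre_dseq X A C d \<Longrightarrow>
  post X A (prd X (prd X C C) (prd X C C)) (prd X (prd X C C) (prd X C C)) (spair X A (prd X C C) (prd X C C) (spair X A C C a b) (spair X A C C c d)) (ccm X C)
  = spair X A (prd X C C) (prd X C C) (spair X A C C a c) (spair X A C C b d)"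
  by (simp add: ccm_def)

lemma act_i10_T: "C \<in> obj X \<Longrightarrow> C' \<in> obj X \<Longrightarrow> pre_dseq X C C' F \<Longrightarrow> Lc X C C' F \<Longrightarrow>
  act X C (prd X C C) (prd X C' C') (i10 X C) (Tseq X C C' F) = post X C C' (prd X C' C') F (i10 X C')"
  by (simp add: Tseq_spair act_act Lc_def)
lemma act_s1_T: "C \<in> obj X \<Longrightarrow> C' \<in> obj X \<Longrightarrow> pre_dseq X C C' F \<Longrightarrow> Lc X C C' F \<Longrightarrow>
  act X (prd X C (prd X C C)) (prd X C C) (prd X C' C') (s1 X C (ssum X C)) (Tseq X C C' F)
  = post X (prd X C (prd X C C)) (prd X C' (prd X C' C')) (prd X C' C')
     (spair X (prd X C (prd X C C)) C' (prd X C' C') (act X (prd X C (prd X C C)) C C' (pr0 X C (prd X C C)) F)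
        (spair X (prd X C (prd X C C)) C' C'
           (act X (prd X C (prd X C C)) (prd X C C) C' (s1 X C (pr0 X C C)) (Dk (Suc 0) F))
           (act X (prd X C (prd X C C)) (prd X C C) C' (s1 X C (pr1 X C C)) (Dk (Suc 0) F))))
     (s1 X C' (ssum X C'))"
  by (simp add: Tseq_spair act_act Lc_def)
lemma act_ell_TT: "C \<in> obj X \<Longrightarrow> C' \<in> obj X \<Longrightarrow> pre_dseq X C C' F \<Longrightarrow> Lc X C C' F \<Longrightarrow>
  act X (prd X C C) (prd X (prd X C C) (prd X C C)) (prd X (prd X C' C') (prd X C' C')) (ellm X C) (Tseq X (prd X C C) (prd X C' C') (Tseq X C C' F))
  = post X (prd X C C) (prd X C' C') (prd X (prd X C' C') (prd X C' C')) (Tseq X C C' F) (ellm X C')"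
  by (simp add: Tseq_spair act_act Lc_def Lc_g1)
lemma act_cc_TT: "C \<in> obj X \<Longrightarrow> C' \<in> obj X \<Longrightarrow> pre_dseq X C C' F \<Longrightarrow> Lc X C C' F \<Longrightarrow>
  act X (prd X (prd X C C) (prd X C C)) (prd X (prd X C C) (prd X C C)) (prd X (prd X C' C') (prd X C' C')) (ccm X C) (Tseq X (prd X C C) (prd X C' C') (Tseq X C C' F))
  = post X (prd X (prd X C C) (prd X C C)) (prd X (prd X C' C') (prd X C' C')) (prd X (prd X C' C') (prd X C' C')) (Tseq X (prd X C C) (prd X C' C') (Tseq X C C' F)) (ccm X C')"
  by (simp add: Tseq_spair act_act Lc_def)


lemma act_s1p0_T: "C \<in> obj X \<Longrightarrow> C' \<in> obj X \<Longrightarrow> pre_dseq X C C' F \<Longrightarrow>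
  act X (prd X C (prd X C C)) (prd X C C) (prd X C' C') (s1 X C (pr0 X C C)) (Tseq X C C' F)
  = post X (prd X C (prd X C C)) (prd X C' (prd X C' C')) (prd X C' C')
     (spair X (prd X C (prd X C C)) C' (prd X C' C') (act X (prd X C (prd X C C)) C C' (pr0 X C (prd X C C)) F)
        (spair X (prd X C (prd X C C)) C' C'
           (act X (prd X C (prd X C C)) (prd X C C) C' (s1 X C (pr0 X C C)) (Dk (Suc 0) F))
           (act X (prd X C (prd X C C)) (prd X C C) C' (s1 X C (pr1 X C C)) (Dk (Suc 0) F))))
     (s1 X C' (pr0 X C' C'))"
  by (simp add: Tseq_spair act_act)
lemma act_s1p1_T: "C \<in> obj X \<Longrightarrow> C' \<in> obj X \<Longrightarrow> pre_dseq X C C' F \<Longrightarrow>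
  act X (prd X C (prd X C C)) (prd X C C) (prd X C' C') (s1 X C (pr1 X C C)) (Tseq X C C' F)
  = post X (prd X C (prd X C C)) (prd X C' (prd X C' C')) (prd X C' C')
     (spair X (prd X C (prd X C C)) C' (prd X C' C') (act X (prd X C (prd X C C)) C C' (pr0 X C (prd X C C)) F)
        (spair X (prd X C (prd X C C)) C' C'
           (act X (prd X C (prd X C C)) (prd X C C) C' (s1 X C (pr0 X C C)) (Dk (Suc 0) F))
           (act X (prd X C (prd X C C)) (prd X C C) C' (s1 X C (pr1 X C C)) (Dk (Suc 0) F))))
     (s1 X C' (pr1 X C' C'))"
  by (simp add: Tseq_spair act_act)

lemma Lc_dcomp: "C \<in> obj X \<Longrightarrow> C' \<in> obj X \<Longrightarrow> E \<in> obj X \<Longrightarrow> pre_dseq X C C' F \<Longrightarrow> pre_dseq X C' E G \<Longrightarrow>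
  Lc X C C' F \<Longrightarrow> Lc X C' E G \<Longrightarrow> Lc X C E (dcomp X C C' E F G)"
proof -
  assume o: "C \<in> obj X" "C' \<in> obj X" "E \<in> obj X" and F: "pre_dseq X C C' F" and G: "pre_dseq X C' E G"
    and LF: "Lc X C C' F" and LG: "Lc X C' E G"
  note c = LG[unfolded Lc_def]
  have d1: "Dk (Suc 0) (dcomp X C C' E F G) = dcomp X (prd X C C) (prd X C' C') E (Tseq X C C' F) (Dk (Suc 0) G)"
    by (simp add: Dk_dcomp)
  have d2: "Dk (Suc (Suc 0)) (dcomp X C C' E F G) = dcomp X (prd X (prd X C C) (prd X C C)) (prd X (prd X C' C') (prd X C' C')) E (Tseq X (prd X C C) (prd X C' C') (Tseq X C C' F)) (Dk (Suc (Suc 0)) G)"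
    by (simp add: Dk_dcomp)
  have 1: "act X C (prd X C C) E (i10 X C) (Dk (Suc 0) (dcomp X C C' E F G)) = szro X C E"
    unfolding d1 using o F G LF c by (simp add: act_dcomp act_i10_T dcomp_post del: post_i10)
  have 2: "act X (prd X C (prd X C C)) (prd X C C) E (s1 X C (ssum X C)) (Dk (Suc 0) (dcomp X C C' E F G))
       = sadd X (prd X C (prd X C C)) E
           (act X (prd X C (prd X C C)) (prd X C C) E (s1 X C (pr0 X C C)) (Dk (Suc 0) (dcomp X C C' E F G)))
           (act X (prd X C (prd X C C)) (prd X C C) E (s1 X C (pr1 X C C)) (Dk (Suc 0) (dcomp X C C' E F G)))"
    unfolding d1 using o F G LF c
    by (simp add: act_dcomp act_s1_T act_s1p0_T act_s1p1_T dcomp_post del: post_s1 act_spair)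
  have 3: "act X (prd X C C) (prd X (prd X C C) (prd X C C)) E (ellm X C) (Dk (Suc (Suc 0)) (dcomp X C C' E F G)) = Dk (Suc 0) (dcomp X C C' E F G)"
    unfolding d1 d2 using o F G LF c by (simp add: act_dcomp act_ell_TT dcomp_post del: post_ellm Tseq_post)
  have 4: "act X (prd X (prd X C C) (prd X C C)) (prd X (prd X C C) (prd X C C)) E (ccm X C) (Dk (Suc (Suc 0)) (dcomp X C C' E F G)) = Dk (Suc (Suc 0)) (dcomp X C C' E F G)"
    unfolding d2 using o F G LF c by (simp add: act_dcomp act_cc_TT dcomp_post del: post_ccm Tseq_post)
  show ?thesis using 1 2 3 4 by (simp add: Lc_def)
qed

lemma dseq_dcomp: "A \<in> obj X \<Longrightarrow> B \<in> obj X \<Longrightarrow> E \<in> obj X \<Longrightarrow> dseq X A B F \<Longrightarrow> dseq X B E G \<Longrightarrow> dseq X A E (dcomp X A B E F G)"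
proof -
  assume o: "A \<in> obj X" "B \<in> obj X" "E \<in> obj X" and F: "dseq X A B F" and G: "dseq X B E G"
  have pF: "pre_dseq X A B F" and pG: "pre_dseq X B E G" using F G by (simp_all add: dseq_pre)
  have "Lc X (Pn X n A) E (dcomp X (Pn X n A) (Pn X n B) E (Tn X n A B F) (Dk n G))" for n
    by (rule Lc_dcomp) (use o pF pG dseq_Lc0[OF dseq_Tn[OF o(1,2) F, of n]] dseq_Lc[OF G, of n] in simp_all)
  then show ?thesis using o pF pG by (simp add: dseq_iff Dk_dcomp)
qed


lemma sadd_assoc: "A \<in> obj X \<Longrightarrow> B \<in> obj X \<Longrightarrow> pre_dseq X A B f \<Longrightarrow> pre_dseq X A B g \<Longrightarrow> pre_dseq X A B h \<Longrightarrow>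
  sadd X A B (sadd X A B f g) h = sadd X A B f (sadd X A B g h)"
  by (rule ext) (simp add: sadd_def add_assoc pre_dseqD[of A B f] pre_dseqD[of A B g] pre_dseqD[of A B h])
lemma sadd_comm: "A \<in> obj X \<Longrightarrow> B \<in> obj X \<Longrightarrow> pre_dseq X A B f \<Longrightarrow> pre_dseq X A B g \<Longrightarrow>
  sadd X A B f g = sadd X A B g f"
  by (rule ext) (simp add: sadd_def pre_dseqD[of A B f] pre_dseqD[of A B g], rule add_comm, simp_all add: pre_dseqD[of A B f] pre_dseqD[of A B g])
lemma dcomp_iseq_post: "A \<in> obj X \<Longrightarrow> B \<in> obj X \<Longrightarrow> B' \<in> obj X \<Longrightarrow> pre_dseq X A B F \<Longrightarrow> h \<in> hom X B B' \<Longrightarrow>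
  dcomp X A B B' F (post X B B B' (iseq X B) h) = post X A B B' F h"
proof (rule ext)
  fix n assume o: "A \<in> obj X" "B \<in> obj X" "B' \<in> obj X" and F: "pre_dseq X A B F" and h: "h \<in> hom X B B'"
  have e: "cmp X (Pn X n A) (Pn X n B) B (Tn X n A B F 0) (iseq X B n) = F n"
    using fun_cong[OF post_Tn_iseq[OF o(1,2) F, of n], of 0] by (simp add: post_def Dk_def)
  have "cmp X (Pn X n A) (Pn X n B) B' (Tn X n A B F 0) (cmp X (Pn X n B) B B' (iseq X B n) h) = cmp X (Pn X n A) B B' (F n) h"
    using e o F h by (simp add: pre_dseqD[of A B F] flip: assoc e)
  then show "dcomp X A B B' F (post X B B B' (iseq X B) h) n = post X A B B' F h n"
    by (simp add: dcomp_def post_def)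
qed
lemma dseq_bng: "A \<in> obj X \<Longrightarrow> dseq X A (trm X) (\<lambda>n. bng X (Pn X n A))"
proof -
  assume A: "A \<in> obj X"
  have pb: "pre_dseq X A (trm X) (\<lambda>n. bng X (Pn X n A))" by (rule pre_dseqI) (simp add: A)
  have u: "\<And>C F G. C \<in> obj X \<Longrightarrow> pre_dseq X C (trm X) F \<Longrightarrow> pre_dseq X C (trm X) G \<Longrightarrow> F = G"
    by (rule ext) (metis bng_uniq Pn_obj pre_dseqD)
  have "Lc X C (trm X) U" if C: "C \<in> obj X" and U: "pre_dseq X C (trm X) U" for C U
    unfolding Lc_def
    apply (intro conjI)
       apply (rule u[of C]) using C U apply simp_all
      apply (rule u[of "prd X C (prd X C C)"]) using C U apply simp_all
     apply (rule u[of "prd X C C"]) using C U apply simp_all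
    apply (rule u[of "prd X (prd X C C) (prd X C C)"]) using C U apply simp_all
    done
  then show ?thesis using A pb by (simp add: dseq_iff)
qed

lemma DX_obj[simp]: "obj (DX X) = obj X" by (simp add: DX_def)
lemma DX_hom[simp]: "hom (DX X) A B = {f. dseq X A B f}" by (simp add: DX_def)
lemma DX_idm[simp]: "idm (DX X) = iseq X" by (simp add: DX_def)
lemma DX_cmp[simp]: "cmp (DX X) = dcomp X" by (simp add: DX_def)
lemma DX_trm[simp]: "trm (DX X) = trm X" by (simp add: DX_def)
lemma DX_bng[simp]: "bng (DX X) A = (\<lambda>n. bng X (Pn X n A))" by (simp add: DX_def)
lemma DX_prd[simp]: "prd (DX X) = prd X" by (simp add: DX_def)
lemma DX_pr0[simp]: "pr0 (DX X) A B = post X (prd X A B) (prd X A B) A (iseq X (prd X A B)) (pr0 X A B)"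
  by (simp add: DX_def post_def)
lemma DX_pr1[simp]: "pr1 (DX X) A B = post X (prd X A B) (prd X A B) B (iseq X (prd X A B)) (pr1 X A B)"
  by (simp add: DX_def post_def)
lemma DX_pair[simp]: "pair (DX X) C A B f g = spair X C A B f g" by (simp add: DX_def spair_def)
lemma DX_zro[simp]: "zro (DX X) A B = szro X A B" by (simp add: DX_def szro_def)
lemma DX_add[simp]: "add (DX X) A B f g = sadd X A B f g" by (simp add: DX_def sadd_def)

lemma DX_cat: "is_category (DX X)"
  unfolding is_category_def
  by (auto simp: dseq_iseq dseq_dcomp dcomp_id_l dcomp_id_r dcomp_assoc dseq_pre)

lemma fp1: "A \<in> obj (DX X) \<Longrightarrow> bng (DX X) A \<in> hom (DX X) A (trm (DX X))"
  by (simp add: dseq_bng)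
lemma fp2: "A \<in> obj (DX X) \<Longrightarrow> f \<in> hom (DX X) A (trm (DX X)) \<Longrightarrow> f = bng (DX X) A"
proof -
  assume A: "A \<in> obj (DX X)" and f: "f \<in> hom (DX X) A (trm (DX X))"
  then have "pre_dseq X A (trm X) f" by (simp add: dseq_pre)
  then show "f = bng (DX X) A" using A by (simp add: fun_eq_iff) (metis bng_uniq Pn_obj pre_dseqD)
qed
lemma fp3: "A \<in> obj (DX X) \<Longrightarrow> B \<in> obj (DX X) \<Longrightarrow> prd (DX X) A B \<in> obj (DX X)"
  by simp
lemma fp4: "A \<in> obj (DX X) \<Longrightarrow> B \<in> obj (DX X) \<Longrightarrow> pr0 (DX X) A B \<in> hom (DX X) (prd (DX X) A B) A"
  by (simp add: dseq_post addm_pr0 dseq_iseq)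
lemma fp5: "A \<in> obj (DX X) \<Longrightarrow> B \<in> obj (DX X) \<Longrightarrow> pr1 (DX X) A B \<in> hom (DX X) (prd (DX X) A B) B"
  by (simp add: dseq_post addm_pr1 dseq_iseq)
lemma fp6: "A \<in> obj (DX X) \<Longrightarrow> B \<in> obj (DX X) \<Longrightarrow> C \<in> obj (DX X) \<Longrightarrow> f \<in> hom (DX X) C A \<Longrightarrow> g \<in> hom (DX X) C B \<Longrightarrow>
  pair (DX X) C A B f g \<in> hom (DX X) C (prd (DX X) A B)"
  by (simp add: dseq_spair)
lemma fp7: "A \<in> obj (DX X) \<Longrightarrow> B \<in> obj (DX X) \<Longrightarrow> C \<in> obj (DX X) \<Longrightarrow> f \<in> hom (DX X) C A \<Longrightarrow> g \<in> hom (DX X) C B \<Longrightarrow>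
  cmp (DX X) C (prd (DX X) A B) A (pair (DX X) C A B f g) (pr0 (DX X) A B) = f"
  by (simp add: dcomp_iseq_post dseq_pre)
lemma fp8: "A \<in> obj (DX X) \<Longrightarrow> B \<in> obj (DX X) \<Longrightarrow> C \<in> obj (DX X) \<Longrightarrow> f \<in> hom (DX X) C A \<Longrightarrow> g \<in> hom (DX X) C B \<Longrightarrow>
  cmp (DX X) C (prd (DX X) A B) B (pair (DX X) C A B f g) (pr1 (DX X) A B) = g"
  by (simp add: dcomp_iseq_post dseq_pre)
lemma fp9: "A \<in> obj (DX X) \<Longrightarrow> B \<in> obj (DX X) \<Longrightarrow> C \<in> obj (DX X) \<Longrightarrow> h \<in> hom (DX X) C (prd (DX X) A B) \<Longrightarrow>
  h = pair (DX X) C A B (cmp (DX X) C (prd (DX X) A B) A h (pr0 (DX X) A B))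
                (cmp (DX X) C (prd (DX X) A B) B h (pr1 (DX X) A B))"
proof -
  assume A: "A \<in> obj (DX X)" and B: "B \<in> obj (DX X)" and C: "C \<in> obj (DX X)" and h: "h \<in> hom (DX X) C (prd (DX X) A B)"
  then have ph: "pre_dseq X C (prd X A B) h" by (simp add: dseq_pre)
  show ?thesis
    using A B C ph by (simp add: dcomp_iseq_post, simp add: fun_eq_iff spair_def post_def pre_dseqD[of C "prd X A B" h])
qed

lemma DX_fp: "has_finite_products (DX X)"
  unfolding has_finite_products_def
  using fp1 fp2 fp3 fp4 fp5 fp6 fp7 fp8 fp9 DX_trm trm_obj DX_obj by metis

lemma DX_la: "is_left_additive (DX X)"
  unfolding is_left_additive_def
  by (auto simp: dseq_szro dseq_sadd sadd_assoc dseq_pre intro: sadd_comm)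

lemma DX_pa: "projections_additive (DX X)"
  unfolding projections_additive_def
  by (auto simp: dcomp_iseq_post dseq_pre post_sadd post_szro addm_pr0 addm_pr1)

lemma DX_CLAC: "is_CLAC (DX X)"
  by (simp add: is_CLAC_def DX_cat DX_fp DX_la DX_pa)

end

theorem proposition4p7:
  fixes X :: "('o, 'm) clac"
  assumes "is_CLAC X"
  shows "is_CLAC (DX X)"
proof -
  interpret CL X by (rule CL.intro) (rule assms)
  show ?thesis by (rule DX_CLAC)
qed

end
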